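(* Let $Z\subset\mathbb{S}_1$ be a finite nonempty set of points. Then the following are equivalent: (i) there exists a positive integer $m$ such that $\alpha(mZ)=\alpha((m+1)Z)=\alpha((m+2)Z)=\alpha((m+3)Z)$; (ii) either $Z=\{Q\}$ with $Q\in E_1$, or $Z=\{Q_1,Q_2\}\subset E_1$ with $Q_1\neq Q_2$.
   Context: Let $P_1\in\mathbb{P}^2(\mathbb{C})$ be a point and $f\colon\mathbb{S}_1\to\mathbb{P}^2$ the blow-up of $\mathbb{P}^2$ at $P_1$, with exceptional curve $E_1=f^{-1}(P_1)$; let $H$ be the pullback of the class of a line. Let $\mathbb{L}_1=3H-E_1=-K_{\mathbb{S}_1}$. For a finite set $Z\subset\mathbb{S}_1$ with ideal sheaf $\mathcal{I}_Z$ and a positive integer $m$, the initial degree is $\alpha(mZ)=\min\{d\ge 0:\ H^0(\mathbb{S}_1,d\mathbb{L}_1\otimes\mathcal{I}_Z^{(m)})\neq 0\}$, i.e. the least $d$ such that some effective divisor $D\in|d\mathbb{L}_1|$ has multiplicity at least $m$ at every point of $Z$. *)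

theory Defs
  imports Complex_Main
begin

text \<open>
  Points of the blow-up S_1 = (P^2 - {P1}) disjoint-union E_1, where E_1 is the
  projectivised tangent space at P1 (directions [s:t] in the affine chart z = 1).
  Projective points are represented by normalised representatives
  (first nonzero coordinate equal to 1).
\<close>

datatype s1pt = Off "complex \<times> complex \<times> complex" | Exc "complex \<times> complex"

definition norm3 :: "complex \<times> complex \<times> complex \<Rightarrow> bool" where
  "norm3 p = (case p of (a, b, c) \<Rightarrow>
      a = 1 \<or> (a = 0 \<and> b = 1) \<or> (a = 0 \<and> b = 0 \<and> c = 1))"

definition norm2 :: "complex \<times> complex \<Rightarrow> bool" where
  "norm2 l = (case l of (s, t) \<Rightarrow> s = 1 \<or> (s = 0 \<and> t = 1))"

definition P1 :: "complex \<times> complex \<times> complex" where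
  "P1 = (0, 0, 1)"

definition S1 :: "s1pt set" where
  "S1 = {Off p | p. norm3 p \<and> p \<noteq> P1} \<union> {Exc l | l. norm2 l}"

definition E1 :: "s1pt set" where
  "E1 = {Exc l | l. norm2 l}"

text \<open>
  A nonzero section of d L_1 = d(3H - E_1) is a nonzero form
  F = sum_{i+j <= 3d} c i j x^i y^j z^(3d-i-j) of degree 3d having multiplicity
  at least d at P1, i.e. c i j = 0 whenever i + j < d.  The corresponding
  divisor is D = f^* V(F) - d E_1.
\<close>
definition sect :: "nat \<Rightarrow> (nat \<Rightarrow> nat \<Rightarrow> complex) \<Rightarrow> bool" where
  "sect d c \<longleftrightarrow> (\<forall>i j. 3 * d < i + j \<longrightarrow> c i j = 0)
               \<and> (\<forall>i j. i + j < d \<longrightarrow> c i j = 0)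
               \<and> (\<exists>i j. c i j \<noteq> 0)"

text \<open>Taylor coefficient of order (a,b,e) of the form F at the point p of P^2
  (equal to the partial derivative d^(a+b+e) F / dx^a dy^b dz^e at p, divided by a! b! e!).\<close>
definition taylor3 :: "nat \<Rightarrow> (nat \<Rightarrow> nat \<Rightarrow> complex) \<Rightarrow> complex \<times> complex \<times> complex
                       \<Rightarrow> nat \<Rightarrow> nat \<Rightarrow> nat \<Rightarrow> complex" where
  "taylor3 d c p a b e = (case p of (p0, p1, p2) \<Rightarrow>
     (\<Sum>i\<le>3*d. \<Sum>j\<le>3*d - i. c i j * of_nat (i choose a) * of_nat (j choose b)
        * of_nat ((3*d - i - j) choose e)
        * p0 ^ (i - a) * p1 ^ (j - b) * p2 ^ (3*d - i - j - e)))"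

text \<open>Taylor coefficient of order (a,b) of the local equation of D at the point
  of E_1 with direction [s:t].  If s \<noteq> 0 we use the chart x = u, y = u v
  (local equation G(u,v) = F(u,uv,1)/u^d, point (0, t/s)); otherwise the chart
  x = w y, y = y (local equation G(w,y) = F(wy,y,1)/y^d, point (s/t, 0)).\<close>
definition taylorE :: "nat \<Rightarrow> (nat \<Rightarrow> nat \<Rightarrow> complex) \<Rightarrow> complex \<times> complex
                       \<Rightarrow> nat \<Rightarrow> nat \<Rightarrow> complex" where
  "taylorE d c l a b = (case l of (s, t) \<Rightarrow>
     (if s \<noteq> 0 then
        (\<Sum>j\<le>d + a. c (d + a - j) j * of_nat (j choose b) * (t / s) ^ (j - b))
      else
        (\<Sum>i\<le>d + b. c i (d + b - i) * of_nat (i choose a) * (s / t) ^ (i - a))))"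

definition mult_ge :: "nat \<Rightarrow> (nat \<Rightarrow> nat \<Rightarrow> complex) \<Rightarrow> s1pt \<Rightarrow> nat \<Rightarrow> bool" where
  "mult_ge d c Q m = (case Q of
      Off p \<Rightarrow> (\<forall>a b e. a + b + e < m \<longrightarrow> taylor3 d c p a b e = 0)
    | Exc l \<Rightarrow> (\<forall>a b. a + b < m \<longrightarrow> taylorE d c l a b = 0))"

definition alpha :: "nat \<Rightarrow> s1pt set \<Rightarrow> nat" where
  "alpha m Z = (LEAST d. \<exists>c. sect d c \<and> (\<forall>Q\<in>Z. mult_ge d c Q m))"

end

theory Submission
  imports Defs
begin


definition T3 :: "nat \<Rightarrow> (nat \<Rightarrow> nat \<Rightarrow> complex) \<Rightarrow> complex \<times> complex \<times> complex
                       \<Rightarrow> nat \<Rightarrow> nat \<Rightarrow> nat \<Rightarrow> complex" where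
  "T3 N c p a b e = (case p of (p0, p1, p2) \<Rightarrow>
     (\<Sum>i\<le>N. \<Sum>j\<le>N - i. c i j * of_nat (i choose a) * of_nat (j choose b)
        * of_nat ((N - i - j) choose e)
        * p0 ^ (i - a) * p1 ^ (j - b) * p2 ^ (N - i - j - e)))"

lemma taylor3_T3: "taylor3 d c = T3 (3*d) c"
  by (auto simp: fun_eq_iff taylor3_def T3_def)

definition high :: "nat \<Rightarrow> (nat \<Rightarrow> nat \<Rightarrow> complex) \<Rightarrow> bool" where
  "high N c \<longleftrightarrow> (\<forall>i j. N < i + j \<longrightarrow> c i j = 0)"
definition low :: "nat \<Rightarrow> (nat \<Rightarrow> nat \<Rightarrow> complex) \<Rightarrow> bool" where
  "low k c \<longleftrightarrow> (\<forall>i j. i + j < k \<longrightarrow> c i j = 0)"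
definition dz :: "nat \<Rightarrow> (nat \<Rightarrow> nat \<Rightarrow> complex) \<Rightarrow> nat \<Rightarrow> nat \<Rightarrow> complex" where
  "dz N c i j = of_nat (N - i - j) * c i j"
definition dx :: "(nat \<Rightarrow> nat \<Rightarrow> complex) \<Rightarrow> nat \<Rightarrow> nat \<Rightarrow> complex" where
  "dx c i j = of_nat (i + 1) * c (i + 1) j"
definition dy :: "(nat \<Rightarrow> nat \<Rightarrow> complex) \<Rightarrow> nat \<Rightarrow> nat \<Rightarrow> complex" where
  "dy c i j = of_nat (j + 1) * c i (j + 1)"

definition t3 where
  "t3 N c p0 p1 p2 a b e i j = c i j * of_nat (i choose a) * of_nat (j choose b)
        * of_nat ((N - i - j) choose e)
        * p0 ^ (i - a) * p1 ^ (j - b) * p2 ^ (N - i - j - e)"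

lemma T3_rect:
  assumes "high N c" "N \<le> K1" "N \<le> K2"
  shows "T3 N c (p0,p1,p2) a b e = (\<Sum>i\<le>K1. \<Sum>j\<le>K2. t3 N c p0 p1 p2 a b e i j)"
proof -
  have inner: "(\<Sum>j\<le>N - i. t3 N c p0 p1 p2 a b e i j) = (\<Sum>j\<le>K2. t3 N c p0 p1 p2 a b e i j)" for i
    by (rule sum.mono_neutral_left) (use assms in \<open>auto simp: t3_def high_def\<close>)
  have "T3 N c (p0,p1,p2) a b e = (\<Sum>i\<le>N. \<Sum>j\<le>K2. t3 N c p0 p1 p2 a b e i j)"
  proof -
    have "T3 N c (p0,p1,p2) a b e = (\<Sum>i\<le>N. \<Sum>j\<le>N - i. t3 N c p0 p1 p2 a b e i j)"
      by (simp add: T3_def t3_def)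
    then show ?thesis using inner by simp
  qed
  also have "\<dots> = (\<Sum>i\<le>K1. \<Sum>j\<le>K2. t3 N c p0 p1 p2 a b e i j)"
    by (rule sum.mono_neutral_left) (use assms in \<open>auto simp: t3_def high_def intro!: sum.neutral\<close>)
  finally show ?thesis .
qed

lemma choose_aux1: "of_nat k * of_nat ((k - 1) choose e) = (of_nat (Suc e) * of_nat (k choose Suc e) :: complex)"
proof (cases k)
  case 0 then show ?thesis by simp
next
  case (Suc k')
  have "k * ((k - 1) choose e) = Suc e * (k choose Suc e)"
    using Suc_times_binomial_eq[of k' e] Suc by (simp add: mult.commute)
  then have "(of_nat (k * ((k - 1) choose e)) :: complex) = of_nat (Suc e * (k choose Suc e))" by simp
  then show ?thesis by (simp only: of_nat_mult)
qed

lemma choose_aux2: "of_nat (Suc i) * of_nat (i choose a) = (of_nat (Suc a) * of_nat (Suc i choose Suc a) :: complex)"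
proof -
  have "Suc i * (i choose a) = Suc a * (Suc i choose Suc a)"
    using Suc_times_binomial_eq[of i a] by (simp add: mult.commute)
  then have "(of_nat (Suc i * (i choose a)) :: complex) = of_nat (Suc a * (Suc i choose Suc a))" by simp
  then show ?thesis by (simp only: of_nat_mult)
qed

lemma high_dz: "high N c \<Longrightarrow> high (N - 1) (dz N c)"
  by (auto simp: high_def dz_def)
lemma high_dx: "high N c \<Longrightarrow> high (N - 1) (dx c)"
  by (auto simp: high_def dx_def)
lemma high_dy: "high N c \<Longrightarrow> high (N - 1) (dy c)"
  by (auto simp: high_def dy_def)
lemma low_dz: "low k c \<Longrightarrow> low k (dz N c)"
  by (auto simp: low_def dz_def)
lemma low_dx: "low k c \<Longrightarrow> low (k - 1) (dx c)"
  by (auto simp: low_def dx_def)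
lemma low_dy: "low k c \<Longrightarrow> low (k - 1) (dy c)"
  by (auto simp: low_def dy_def)

lemma T3_dz:
  assumes "high N c"
  shows "T3 (N - 1) (dz N c) (p0,p1,p2) a b e = of_nat (Suc e) * T3 N c (p0,p1,p2) a b (Suc e)"
proof -
  have L: "T3 (N - 1) (dz N c) (p0,p1,p2) a b e = (\<Sum>i\<le>N. \<Sum>j\<le>N. t3 (N - 1) (dz N c) p0 p1 p2 a b e i j)"
    by (rule T3_rect) (use high_dz[OF assms] in auto)
  have R: "T3 N c (p0,p1,p2) a b (Suc e) = (\<Sum>i\<le>N. \<Sum>j\<le>N. t3 N c p0 p1 p2 a b (Suc e) i j)"
    by (rule T3_rect) (use assms in auto)
  have "t3 (N - 1) (dz N c) p0 p1 p2 a b e i j = of_nat (Suc e) * t3 N c p0 p1 p2 a b (Suc e) i j" for i j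
  proof -
    have "N - 1 - i - j = (N - i - j) - 1" by simp
    moreover have "N - 1 - i - j - e = N - i - j - Suc e" by simp
    ultimately show ?thesis
      unfolding t3_def dz_def
      using choose_aux1[of "N - i - j" e]
      by (simp add: algebra_simps del: binomial_Suc_Suc)
  qed
  then show ?thesis unfolding L R by (simp add: sum_distrib_left)
qed

lemma T3_dx:
  assumes "high N c"
  shows "T3 (N - 1) (dx c) (p0,p1,p2) a b e = of_nat (Suc a) * T3 N c (p0,p1,p2) (Suc a) b e"
proof -
  have L: "T3 (N - 1) (dx c) (p0,p1,p2) a b e = (\<Sum>i\<le>N. \<Sum>j\<le>N. t3 (N - 1) (dx c) p0 p1 p2 a b e i j)"
    by (rule T3_rect) (use high_dx[OF assms] in auto)
  have R: "T3 N c (p0,p1,p2) (Suc a) b e = (\<Sum>i\<le>Suc N. \<Sum>j\<le>N. t3 N c p0 p1 p2 (Suc a) b e i j)"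
    by (rule T3_rect) (use assms in auto)
  also have "\<dots> = (\<Sum>i\<le>N. \<Sum>j\<le>N. t3 N c p0 p1 p2 (Suc a) b e (Suc i) j)"
    by (subst sum.atMost_Suc_shift) (simp add: t3_def)
  finally have R': "T3 N c (p0,p1,p2) (Suc a) b e = (\<Sum>i\<le>N. \<Sum>j\<le>N. t3 N c p0 p1 p2 (Suc a) b e (Suc i) j)" .
  have "t3 (N - 1) (dx c) p0 p1 p2 a b e i j = of_nat (Suc a) * t3 N c p0 p1 p2 (Suc a) b e (Suc i) j" for i j
  proof -
    define W where "W = c (Suc i) j * of_nat (j choose b) * of_nat ((N - Suc i - j) choose e)
       * p0^(i-a) * p1^(j-b) * p2^(N - Suc i - j - e)"
    have "N - 1 - i - j = N - Suc i - j" by simp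
    then have 1: "t3 (N - 1) (dx c) p0 p1 p2 a b e i j = (of_nat (Suc i) * of_nat (i choose a)) * W"
      unfolding t3_def dx_def W_def by (simp only: mult_ac Suc_eq_plus1)
    have 2: "t3 N c p0 p1 p2 (Suc a) b e (Suc i) j = of_nat (Suc i choose Suc a) * W"
      unfolding t3_def W_def by (simp only: mult_ac diff_Suc_Suc)
    show ?thesis unfolding 1 2 choose_aux2 by (simp only: mult_ac)
  qed
  then show ?thesis unfolding L R' by (simp add: sum_distrib_left)
qed

lemma T3_dy:
  assumes "high N c"
  shows "T3 (N - 1) (dy c) (p0,p1,p2) a b e = of_nat (Suc b) * T3 N c (p0,p1,p2) a (Suc b) e"
proof -
  have L: "T3 (N - 1) (dy c) (p0,p1,p2) a b e = (\<Sum>i\<le>N. \<Sum>j\<le>N. t3 (N - 1) (dy c) p0 p1 p2 a b e i j)"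
    by (rule T3_rect) (use high_dy[OF assms] in auto)
  have R: "T3 N c (p0,p1,p2) a (Suc b) e = (\<Sum>i\<le>N. \<Sum>j\<le>Suc N. t3 N c p0 p1 p2 a (Suc b) e i j)"
    by (rule T3_rect) (use assms in auto)
  also have "\<dots> = (\<Sum>i\<le>N. \<Sum>j\<le>N. t3 N c p0 p1 p2 a (Suc b) e i (Suc j))"
    by (rule sum.cong[OF refl], subst sum.atMost_Suc_shift) (simp add: t3_def)
  finally have R': "T3 N c (p0,p1,p2) a (Suc b) e = (\<Sum>i\<le>N. \<Sum>j\<le>N. t3 N c p0 p1 p2 a (Suc b) e i (Suc j))" .
  have "t3 (N - 1) (dy c) p0 p1 p2 a b e i j = of_nat (Suc b) * t3 N c p0 p1 p2 a (Suc b) e i (Suc j)" for i j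
  proof -
    define W where "W = c i (Suc j) * of_nat (i choose a) * of_nat ((N - i - Suc j) choose e)
       * p0^(i-a) * p1^(j-b) * p2^(N - i - Suc j - e)"
    have "N - 1 - i - j = N - i - Suc j" by simp
    then have 1: "t3 (N - 1) (dy c) p0 p1 p2 a b e i j = (of_nat (Suc j) * of_nat (j choose b)) * W"
      unfolding t3_def dy_def W_def by (simp only: mult_ac Suc_eq_plus1)
    have 2: "t3 N c p0 p1 p2 a (Suc b) e i (Suc j) = of_nat (Suc j choose Suc b) * W"
      unfolding t3_def W_def by (simp only: mult_ac diff_Suc_Suc)
    show ?thesis unfolding 1 2 choose_aux2 by (simp only: mult_ac)
  qed
  then show ?thesis unfolding L R' by (simp add: sum_distrib_left)
qed

definition offM :: "nat \<Rightarrow> (nat \<Rightarrow> nat \<Rightarrow> complex) \<Rightarrow> complex \<times> complex \<times> complex \<Rightarrow> nat \<Rightarrow> bool" where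
  "offM N c p M \<longleftrightarrow> (\<forall>a b e. a + b + e < M \<longrightarrow> T3 N c p a b e = 0)"

lemma offM_dz: assumes "high N c" "offM N c p M" shows "offM (N - 1) (dz N c) p (M - 1)"
  unfolding offM_def
proof (intro allI impI)
  fix a b e assume "a + b + e < M - 1"
  obtain p0 p1 p2 where p: "p = (p0,p1,p2)" by (cases p) auto
  have "T3 N c p a b (Suc e) = 0" using assms(2) \<open>a + b + e < M - 1\<close> unfolding offM_def by auto
  then show "T3 (N - 1) (dz N c) p a b e = 0" unfolding p T3_dz[OF assms(1)] by simp
qed
lemma offM_dx: assumes "high N c" "offM N c p M" shows "offM (N - 1) (dx c) p (M - 1)"
  unfolding offM_def
proof (intro allI impI)
  fix a b e assume "a + b + e < M - 1"
  obtain p0 p1 p2 where p: "p = (p0,p1,p2)" by (cases p) auto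
  have "T3 N c p (Suc a) b e = 0" using assms(2) \<open>a + b + e < M - 1\<close> unfolding offM_def by auto
  then show "T3 (N - 1) (dx c) p a b e = 0" unfolding p T3_dx[OF assms(1)] by simp
qed
lemma offM_dy: assumes "high N c" "offM N c p M" shows "offM (N - 1) (dy c) p (M - 1)"
  unfolding offM_def
proof (intro allI impI)
  fix a b e assume "a + b + e < M - 1"
  obtain p0 p1 p2 where p: "p = (p0,p1,p2)" by (cases p) auto
  have "T3 N c p a (Suc b) e = 0" using assms(2) \<open>a + b + e < M - 1\<close> unfolding offM_def by auto
  then show "T3 (N - 1) (dy c) p a b e = 0" unfolding p T3_dy[OF assms(1)] by simp
qed
lemma offM_mono: "offM N c p M \<Longrightarrow> M' \<le> M \<Longrightarrow> offM N c p M'"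
  by (auto simp: offM_def)



definition TC :: "(nat \<Rightarrow> complex) \<Rightarrow> nat \<Rightarrow> complex \<Rightarrow> nat \<Rightarrow> complex" where
  "TC g N t b = (\<Sum>j\<le>N. g j * of_nat (j choose b) * t ^ (j - b))"
definition lev :: "(nat \<Rightarrow> nat \<Rightarrow> complex) \<Rightarrow> nat \<Rightarrow> nat \<Rightarrow> complex" where
  "lev c n j = c (n - j) j"
definition good :: "complex \<times> complex \<Rightarrow> bool" where
  "good l \<longleftrightarrow> (\<exists>t. l = (1, t)) \<or> l = (0, 1)"
definition exM :: "nat \<Rightarrow> (nat \<Rightarrow> nat \<Rightarrow> complex) \<Rightarrow> complex \<times> complex \<Rightarrow> nat \<Rightarrow> bool" where
  "exM k c l M \<longleftrightarrow> (\<forall>a b. a + b < M \<longrightarrow> taylorE k c l a b = 0)"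

lemma norm2_good: "norm2 l \<Longrightarrow> good l"
  by (cases l) (auto simp: norm2_def good_def)

lemma goodE: "good l \<Longrightarrow> (\<And>t. l = (1, t) \<Longrightarrow> P) \<Longrightarrow> (l = (0, 1) \<Longrightarrow> P) \<Longrightarrow> P"
  unfolding good_def by blast

lemma tE1: "taylorE k c (1, t) a b = TC (lev c (k + a)) (k + a) t b"
  by (simp add: taylorE_def TC_def lev_def)

lemma tE0: "taylorE k c (0, 1) a b = (if a \<le> k + b then c a (k + b - a) else 0)"
proof -
  have "taylorE k c (0, 1) a b = (\<Sum>i\<le>k + b. c i (k + b - i) * of_nat (i choose a) * 0 ^ (i - a))"
    by (simp add: taylorE_def)
  also have "\<dots> = (\<Sum>i\<le>k + b. (if i = a then c a (k + b - a) else 0))"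
    by (rule sum.cong) auto
  also have "\<dots> = (if a \<le> k + b then c a (k + b - a) else 0)"
    by (simp add: sum.delta)
  finally show ?thesis .
qed

lemma exM_mono: "exM k c l M \<Longrightarrow> M' \<le> M \<Longrightarrow> exM k c l M'"
  by (auto simp: exM_def)

lemma tE1_dz: "taylorE k (dz N c) (1, t) a b = of_nat (N - (k + a)) * taylorE k c (1, t) a b"
  unfolding tE1 TC_def sum_distrib_left
  by (rule sum.cong) (auto simp: lev_def dz_def)

lemma exM_dz: assumes "good l" "exM k c l M" shows "exM k (dz N c) l M"
  using assms(1)
proof (rule goodE)
  fix t assume l: "l = (1, t)"
  show ?thesis using assms(2) unfolding l exM_def tE1_dz by simp
next
  assume l: "l = (0, 1)"
  show ?thesis unfolding l exM_def
  proof (intro allI impI)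
    fix a b assume ab: "a + b < M"
    have "taylorE k c (0, 1) a b = 0" using assms(2) ab unfolding l exM_def by auto
    then show "taylorE k (dz N c) (0, 1) a b = 0"
      unfolding tE0 by (auto simp: dz_def split: if_splits)
  qed
qed

lemma tE1_dy: "taylorE k (dy c) (1, t) a b = of_nat (Suc b) * taylorE (Suc k) c (1, t) a (Suc b)"
proof -
  have "taylorE (Suc k) c (1, t) a (Suc b) = (\<Sum>j\<le>Suc (k + a). c (Suc (k + a) - j) j * of_nat (j choose Suc b) * t ^ (j - Suc b))"
    by (simp add: tE1 TC_def lev_def)
  also have "\<dots> = (\<Sum>j\<le>k + a. c (k + a - j) (Suc j) * of_nat (Suc j choose Suc b) * t ^ (j - b))"
    by (subst sum.atMost_Suc_shift) simp
  finally have R: "taylorE (Suc k) c (1, t) a (Suc b) = \<dots>" .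
  have "taylorE k (dy c) (1, t) a b = (\<Sum>j\<le>k + a. (of_nat (Suc j) * of_nat (j choose b)) * (c (k + a - j) (Suc j) * t ^ (j - b)))"
    by (simp add: tE1 TC_def lev_def dy_def mult_ac)
  also have "\<dots> = (\<Sum>j\<le>k + a. (of_nat (Suc b) * of_nat (Suc j choose Suc b)) * (c (k + a - j) (Suc j) * t ^ (j - b)))"
    by (simp only: choose_aux2)
  also have "\<dots> = of_nat (Suc b) * (\<Sum>j\<le>k + a. c (k + a - j) (Suc j) * of_nat (Suc j choose Suc b) * t ^ (j - b))"
    by (simp add: sum_distrib_left mult_ac)
  finally show ?thesis unfolding R .
qed

lemma exM_dy: assumes "good l" "exM (Suc k) c l M" shows "exM k (dy c) l (M - 1)"
  using assms(1)
proof (rule goodE)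
  fix t assume l: "l = (1, t)"
  show ?thesis using assms(2) unfolding l exM_def tE1_dy by simp
next
  assume l: "l = (0, 1)"
  show ?thesis unfolding l exM_def
  proof (intro allI impI)
    fix a b assume ab: "a + b < M - 1"
    have "taylorE (Suc k) c (0, 1) a b = 0" using assms(2) ab unfolding l exM_def by auto
    then show "taylorE k (dy c) (0, 1) a b = 0"
      unfolding tE0 by (auto simp: dy_def split: if_splits simp: Suc_diff_le)
  qed
qed

lemma choose_aux3:
  "of_nat j * of_nat (j choose b) * (t::complex) ^ (j - b) =
   of_nat b * of_nat (j choose b) * t ^ (j - b) + of_nat (Suc b) * of_nat (j choose Suc b) * t * t ^ (j - Suc b)"
proof (cases "j \<le> b")
  case True
  then show ?thesis by (cases "j = b") (auto simp: binomial_eq_0)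
next
  case False
  have e: "Suc b * (j choose Suc b) = (j - b) * (j choose b)"
    using times_binomial_minus1_eq[of "Suc b" j] binomial_absorb_comp[of j b] by simp
  have "(of_nat (Suc b * (j choose Suc b)) :: complex) = of_nat ((j - b) * (j choose b))"
    using e by simp
  then have e': "of_nat (Suc b) * of_nat (j choose Suc b) = (of_nat j - of_nat b) * (of_nat (j choose b) :: complex)"
    using False by (simp add: of_nat_diff algebra_simps)
  have tt: "t * t ^ (j - Suc b) = t ^ (j - b)"
    using False by (metis Suc_diff_Suc not_le power_Suc)
  have "of_nat (Suc b) * of_nat (j choose Suc b) * t * t ^ (j - Suc b) = (of_nat (Suc b) * of_nat (j choose Suc b)) * t ^ (j - b)"
    using tt by (simp add: mult.assoc)
  also have "\<dots> = (of_nat j - of_nat b) * of_nat (j choose b) * t ^ (j - b)" by (simp only: e')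
  finally show ?thesis by (simp add: algebra_simps)
qed

lemma tE1_dx: "taylorE k (dx c) (1, t) a b =
   (of_nat (Suc (k + a)) - of_nat b) * taylorE (Suc k) c (1, t) a b
   - of_nat (Suc b) * t * taylorE (Suc k) c (1, t) a (Suc b)"
proof -
  define n where "n = Suc (k + a)"
  define g where "g = lev c n"
  have TE: "taylorE (Suc k) c (1, t) a b' = TC g n t b'" for b'
    by (simp add: tE1 g_def n_def)
  have "taylorE k (dx c) (1, t) a b = (\<Sum>j\<le>k + a. (of_nat n - of_nat j) * g j * of_nat (j choose b) * t ^ (j - b))"
    unfolding tE1 TC_def
    by (rule sum.cong) (auto simp: lev_def dx_def g_def n_def of_nat_diff Suc_diff_le)
  also have "\<dots> = (\<Sum>j\<le>n. (of_nat n - of_nat j) * g j * of_nat (j choose b) * t ^ (j - b))"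
    by (simp add: n_def)
  also have "\<dots> = of_nat n * TC g n t b - (\<Sum>j\<le>n. g j * (of_nat j * of_nat (j choose b) * t ^ (j - b)))"
    by (simp add: TC_def sum_distrib_left algebra_simps sum_subtractf)
  also have "(\<Sum>j\<le>n. g j * (of_nat j * of_nat (j choose b) * t ^ (j - b))) =
      of_nat b * TC g n t b + of_nat (Suc b) * t * TC g n t (Suc b)"
    unfolding choose_aux3 TC_def by (simp add: sum_distrib_left sum.distrib algebra_simps)
  finally show ?thesis unfolding TE n_def by (simp add: algebra_simps)
qed

lemma exM_dx: assumes "good l" "exM (Suc k) c l M" shows "exM k (dx c) l (M - 1)"
  using assms(1)
proof (rule goodE)
  fix t assume l: "l = (1, t)"
  show ?thesis using assms(2) unfolding l exM_def tE1_dx by simp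
next
  assume l: "l = (0, 1)"
  show ?thesis unfolding l exM_def
  proof (intro allI impI)
    fix a b assume ab: "a + b < M - 1"
    have "taylorE (Suc k) c (0, 1) (Suc a) b = 0" using assms(2) ab unfolding l exM_def by auto
    then show "taylorE k (dx c) (0, 1) a b = 0"
      unfolding tE0 by (auto simp: dx_def split: if_splits)
  qed
qed

lemma exM_raise: assumes "good l" "exM k c l M" shows "exM (Suc k) c l (M - 1)"
  using assms(1)
proof (rule goodE)
  fix t assume l: "l = (1, t)"
  have "taylorE (Suc k) c (1, t) a b = taylorE k c (1, t) (Suc a) b" for a b
    by (simp add: tE1)
  then show ?thesis using assms(2) unfolding l exM_def by simp
next
  assume l: "l = (0, 1)"
  have "taylorE (Suc k) c (0, 1) a b = taylorE k c (0, 1) a (Suc b)" for a b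
    by (simp add: tE0)
  then show ?thesis using assms(2) unfolding l exM_def by simp
qed

lemma exM_lower: assumes "good l" "low (Suc k) c" "exM (Suc k) c l M" shows "exM k c l (Suc M)"
  using assms(1)
proof (rule goodE)
  fix t assume l: "l = (1, t)"
  show ?thesis unfolding l exM_def
  proof (intro allI impI)
    fix a b assume ab: "a + b < Suc M"
    show "taylorE k c (1, t) a b = 0"
    proof (cases a)
      case 0
      then show ?thesis using assms(2) by (auto simp: tE1 TC_def lev_def low_def intro!: sum.neutral)
    next
      case (Suc a')
      have "taylorE k c (1, t) a b = taylorE (Suc k) c (1, t) a' b" by (simp add: tE1 Suc)
      then show ?thesis using assms(3) ab Suc unfolding l exM_def by simp
    qed
  qed
next
  assume l: "l = (0, 1)"
  show ?thesis unfolding l exM_def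
  proof (intro allI impI)
    fix a b assume ab: "a + b < Suc M"
    show "taylorE k c (0, 1) a b = 0"
    proof (cases b)
      case 0
      then show ?thesis using assms(2) by (auto simp: tE0 low_def)
    next
      case (Suc b')
      have "taylorE k c (0, 1) a b = taylorE (Suc k) c (0, 1) a b'" by (simp add: tE0 Suc)
      then show ?thesis using assms(3) ab Suc unfolding l exM_def by simp
    qed
  qed
qed



lemma one_plus_of_nat_ne0 [simp]: "1 + of_nat n \<noteq> (0::complex)" "of_nat n + 1 \<noteq> (0::complex)"
  using of_nat_neq_0[of n, where 'a=complex] by (simp_all add: add.commute)

lemma mult_ge_Off: "mult_ge d c (Off p) M \<longleftrightarrow> offM (3 * d) c p M"
  by (simp add: mult_ge_def offM_def taylor3_T3)
lemma mult_ge_Exc: "mult_ge d c (Exc l) M \<longleftrightarrow> exM d c l M"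
  by (simp add: mult_ge_def exM_def)

lemma sect_iff: "sect d c \<longleftrightarrow> high (3 * d) c \<and> low d c \<and> (\<exists>i j. c i j \<noteq> 0)"
  by (simp add: sect_def high_def low_def)

lemma S1_cases:
  assumes "Q \<in> S1"
  obtains p where "Q = Off p" "norm3 p" "p \<noteq> P1" | l where "Q = Exc l" "norm2 l"
  using assms unfolding S1_def by blast

lemma low_mono: "low k c \<Longrightarrow> k' \<le> k \<Longrightarrow> low k' c"
  by (auto simp: low_def)

definition isD :: "((nat \<Rightarrow> nat \<Rightarrow> complex) \<Rightarrow> nat \<Rightarrow> nat \<Rightarrow> complex) \<Rightarrow> bool" where
  "isD X \<longleftrightarrow> X = dx \<or> X = dy"

lemma isD_high: "isD X \<Longrightarrow> high N c \<Longrightarrow> high (N - 1) (X c)"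
  by (metis isD_def high_dx high_dy)
lemma isD_low: "isD X \<Longrightarrow> low k c \<Longrightarrow> low (k - 1) (X c)"
  by (metis isD_def low_dx low_dy)
lemma isD_offM: "isD X \<Longrightarrow> high N c \<Longrightarrow> offM N c p M \<Longrightarrow> offM (N - 1) (X c) p (M - 1)"
  by (metis isD_def offM_dx offM_dy)
lemma isD_exM: "isD X \<Longrightarrow> good l \<Longrightarrow> exM (Suc k) c l M \<Longrightarrow> exM k (X c) l (M - 1)"
  by (metis isD_def exM_dx exM_dy)

definition trfm :: "nat \<Rightarrow> (nat \<Rightarrow> nat \<Rightarrow> complex) \<Rightarrow> (nat \<Rightarrow> nat \<Rightarrow> complex) \<Rightarrow> nat \<Rightarrow> bool" where
  "trfm d' c c' m \<longleftrightarrow> high (3 * d') c' \<and> low d' c' \<and>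
     (\<forall>p. offM (3 * d' + 3) c p (m + 3) \<longrightarrow> offM (3 * d') c' p m) \<and>
     (\<forall>l. good l \<longrightarrow> exM (Suc d') c l (m + 3) \<longrightarrow> exM d' c' l m)"

lemma trans_ok:
  assumes "\<forall>Q\<in>Z. mult_ge (Suc d') c Q (m + 3)" "Z \<subseteq> S1" "trfm d' c c' m" "c' i j \<noteq> 0"
  shows "\<exists>c'. sect d' c' \<and> (\<forall>Q\<in>Z. mult_ge d' c' Q m)"
proof (intro exI conjI ballI)
  show "sect d' c'" using assms(3,4) unfolding sect_iff trfm_def by blast
next
  fix Q assume Q: "Q \<in> Z"
  then have QS: "Q \<in> S1" using assms(2) by auto
  have h: "mult_ge (Suc d') c Q (m + 3)" using assms(1) Q by auto
  show "mult_ge d' c' Q m"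
  proof (cases rule: S1_cases[OF QS])
    case (1 p)
    have "offM (3 * Suc d') c p (m + 3)" using h 1 by (simp only: mult_ge_Off)
    moreover have "3 * Suc d' = 3 * d' + 3" by simp
    ultimately have "offM (3 * d' + 3) c p (m + 3)" by metis
    then show ?thesis using assms(3) unfolding 1(1) mult_ge_Off trfm_def by blast
  next
    case (2 l)
    have "exM (Suc d') c l (m + 3)" using h 2 by (simp only: mult_ge_Exc)
    then show ?thesis using assms(3) norm2_good[OF 2(2)] unfolding 2(1) mult_ge_Exc trfm_def by blast
  qed
qed

lemma trans_zzz:
  assumes "high (3 * d' + 3) c" "low (Suc d') c"
  shows "trfm d' c (dz (3 * d' + 1) (dz (3 * d' + 2) (dz (3 * d' + 3) c))) m"
proof -
  let ?c1 = "dz (3 * d' + 3) c" let ?c2 = "dz (3 * d' + 2) ?c1" let ?c3 = "dz (3 * d' + 1) ?c2"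
  have h1: "high (3 * d' + 2) ?c1" using high_dz[OF assms(1)] by simp
  have h2: "high (3 * d' + 1) ?c2" using high_dz[OF h1] by simp
  have h3: "high (3 * d') ?c3" using high_dz[OF h2] by simp
  have l3: "low (Suc d') ?c3" using assms(2) by (simp add: low_dz)
  have off: "offM (3 * d') ?c3 p m" if "offM (3 * d' + 3) c p (m + 3)" for p
  proof -
    have "offM (3 * d' + 2) ?c1 p (m + 2)" using offM_dz[OF assms(1) that] by simp
    then have "offM (3 * d' + 1) ?c2 p (m + 1)" using offM_dz[OF h1] by fastforce
    then show ?thesis using offM_dz[OF h2] by fastforce
  qed
  have ex: "exM d' ?c3 l m" if "good l" "exM (Suc d') c l (m + 3)" for l
  proof -
    have "exM (Suc d') ?c3 l (m + 3)" using that by (simp add: exM_dz)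
    then have "exM d' ?c3 l (Suc (m + 3))" by (rule exM_lower[OF that(1) l3])
    then show ?thesis by (rule exM_mono) simp
  qed
  show ?thesis unfolding trfm_def using h3 l3 off ex low_mono[OF l3] by auto
qed

lemma trans_Dzz:
  assumes "high (3 * d' + 3) c" "low (Suc d') c" "isD X"
  shows "trfm d' c (dz (3 * d' + 1) (dz (3 * d' + 2) (X c))) m"
proof -
  let ?c1 = "X c" let ?c2 = "dz (3 * d' + 2) ?c1" let ?c3 = "dz (3 * d' + 1) ?c2"
  have h1: "high (3 * d' + 2) ?c1" using isD_high[OF assms(3) assms(1)] by simp
  have h2: "high (3 * d' + 1) ?c2" using high_dz[OF h1] by simp
  have h3: "high (3 * d') ?c3" using high_dz[OF h2] by simp
  have l3: "low d' ?c3" using isD_low[OF assms(3) assms(2)] by (simp add: low_dz)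
  have off: "offM (3 * d') ?c3 p m" if "offM (3 * d' + 3) c p (m + 3)" for p
  proof -
    have "offM (3 * d' + 2) ?c1 p (m + 2)" using isD_offM[OF assms(3) assms(1) that] by simp
    then have "offM (3 * d' + 1) ?c2 p (m + 1)" using offM_dz[OF h1] by fastforce
    then show ?thesis using offM_dz[OF h2] by fastforce
  qed
  have ex: "exM d' ?c3 l m" if "good l" "exM (Suc d') c l (m + 3)" for l
  proof -
    have "exM d' ?c1 l (m + 2)" using isD_exM[OF assms(3) that] by simp
    then have "exM d' ?c3 l (m + 2)" using that by (simp add: exM_dz)
    then show ?thesis by (rule exM_mono) simp
  qed
  show ?thesis unfolding trfm_def using h3 l3 off ex by auto
qed

lemma trans_DDz:
  assumes "high (3 * d' + 3) c" "low (3 * d' + 2) c" "isD X1" "isD X2"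
  shows "trfm d' c (dz (3 * d' + 1) (X2 (X1 c))) m"
proof -
  let ?c1 = "X1 c" let ?c2 = "X2 ?c1" let ?c3 = "dz (3 * d' + 1) ?c2"
  have h1: "high (3 * d' + 2) ?c1" using isD_high[OF assms(3) assms(1)] by simp
  have h2: "high (3 * d' + 1) ?c2" using isD_high[OF assms(4) h1] by simp
  have h3: "high (3 * d') ?c3" using high_dz[OF h2] by simp
  have l0: "low (Suc (Suc d')) c" using low_mono[OF assms(2)] by simp
  have l1: "low (Suc d') ?c1" using isD_low[OF assms(3) l0] by simp
  have l2: "low d' ?c2" using isD_low[OF assms(4) l1] by simp
  have l3: "low d' ?c3" using l2 by (simp add: low_dz)
  have off: "offM (3 * d') ?c3 p m" if "offM (3 * d' + 3) c p (m + 3)" for p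
  proof -
    have "offM (3 * d' + 2) ?c1 p (m + 2)" using isD_offM[OF assms(3) assms(1) that] by simp
    then have "offM (3 * d' + 1) ?c2 p (m + 1)" using isD_offM[OF assms(4) h1] by fastforce
    then show ?thesis using offM_dz[OF h2] by fastforce
  qed
  have ex: "exM d' ?c3 l m" if "good l" "exM (Suc d') c l (m + 3)" for l
  proof -
    have "exM (Suc (Suc d')) c l (m + 2)" using exM_raise[OF that] by simp
    then have "exM (Suc d') ?c1 l (m + 1)" using isD_exM[OF assms(3) that(1)] by fastforce
    then have "exM d' ?c2 l m" using isD_exM[OF assms(4) that(1)] by fastforce
    then show ?thesis using that by (simp add: exM_dz)
  qed
  show ?thesis unfolding trfm_def using h3 l3 off ex by auto
qed

lemma isD_dx: "isD dx" and isD_dy: "isD dy" by (auto simp: isD_def)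

lemma stepAB:
  assumes sc: "sect (Suc d') c" and mZ: "\<forall>Q\<in>Z. mult_ge (Suc d') c Q (m + 3)" and ZS: "Z \<subseteq> S1"
    and nb: "\<exists>i j. i + j < 3 * d' + 3 \<and> c i j \<noteq> 0"
  shows "\<exists>c'. sect d' c' \<and> (\<forall>Q\<in>Z. mult_ge d' c' Q m)"
proof -
  have H: "high (3 * d' + 3) c" and L: "low (Suc d') c" using sc by (auto simp: sect_iff add.commute)
  show ?thesis
  proof (cases "\<exists>i j. i + j + 3 \<le> 3 * d' + 3 \<and> c i j \<noteq> 0")
    case True
    then obtain i j where ij: "i + j + 3 \<le> 3 * d' + 3" "c i j \<noteq> 0" by blast
    have "dz (3 * d' + 1) (dz (3 * d' + 2) (dz (3 * d' + 3) c)) i j \<noteq> 0"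
      unfolding dz_def mult_eq_0_iff of_nat_eq_0_iff de_Morgan_disj using ij by simp
    then show ?thesis using trans_ok[OF mZ ZS trans_zzz[OF H L]] by blast
  next
    case F1: False
    show ?thesis
    proof (cases "\<exists>i j. i + j + 2 = 3 * d' + 3 \<and> c i j \<noteq> 0")
      case True
      then obtain i j where ij: "i + j + 2 = 3 * d' + 3" "c i j \<noteq> 0" by blast
      show ?thesis
      proof (cases i)
        case (Suc i')
        have "dz (3 * d' + 1) (dz (3 * d' + 2) (dx c)) i' j \<noteq> 0"
          unfolding dz_def dx_def mult_eq_0_iff of_nat_eq_0_iff de_Morgan_disj using ij Suc by simp
        then show ?thesis using trans_ok[OF mZ ZS trans_Dzz[OF H L isD_dx]] by blast
      next
        case 0
        then obtain j' where j': "j = Suc j'" using ij by (cases j) auto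
        have "dz (3 * d' + 1) (dz (3 * d' + 2) (dy c)) i j' \<noteq> 0"
          unfolding dz_def dy_def mult_eq_0_iff of_nat_eq_0_iff de_Morgan_disj using ij j' 0 by simp
        then show ?thesis using trans_ok[OF mZ ZS trans_Dzz[OF H L isD_dy]] by blast
      qed
    next
      case F2: False
      have L2: "low (3 * d' + 2) c" unfolding low_def
      proof (intro allI impI)
        fix i j assume "i + j < 3 * d' + 2"
        then show "c i j = 0" using F1 F2
          by (cases "i + j + 3 \<le> 3 * d' + 3") auto
      qed
      from nb obtain i j where ij: "i + j < 3 * d' + 3" "c i j \<noteq> 0" by blast
      have ij2: "i + j = 3 * d' + 2"
        using ij L2 by (cases "i + j < 3 * d' + 2") (auto simp: low_def)
      show ?thesis
      proof (cases "2 \<le> i")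
        case True
        then obtain i' where i': "i = Suc (Suc i')" by (metis add_2_eq_Suc le_Suc_ex)
        have "dz (3 * d' + 1) (dx (dx c)) i' j \<noteq> 0"
          unfolding dz_def dx_def mult_eq_0_iff of_nat_eq_0_iff de_Morgan_disj using ij ij2 i' by simp
        then show ?thesis using trans_ok[OF mZ ZS trans_DDz[OF H L2 isD_dx isD_dx]] by blast
      next
        case False
        show ?thesis
        proof (cases i)
          case 0
          then obtain j' where j': "j = Suc (Suc j')" using ij2 by (metis add_0 add_2_eq_Suc' add_Suc_right)
          have "dz (3 * d' + 1) (dy (dy c)) i j' \<noteq> 0"
            unfolding dz_def dy_def mult_eq_0_iff of_nat_eq_0_iff de_Morgan_disj using ij ij2 j' 0 by simp
          then show ?thesis using trans_ok[OF mZ ZS trans_DDz[OF H L2 isD_dy isD_dy]] by blast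
        next
          case (Suc i')
          then have i': "i' = 0" using False by simp
          then obtain j' where j': "j = Suc j'" using ij2 Suc by (cases j) auto
          have "dz (3 * d' + 1) (dy (dx c)) i' j' \<noteq> 0"
            unfolding dz_def dy_def dx_def mult_eq_0_iff of_nat_eq_0_iff de_Morgan_disj using ij ij2 j' Suc i' by simp
          then show ?thesis using trans_ok[OF mZ ZS trans_DDz[OF H L2 isD_dx isD_dy]] by blast
        qed
      qed
    qed
  qed
qed



definition hg :: "nat \<Rightarrow> (nat \<Rightarrow> complex) \<Rightarrow> bool" where
  "hg N g \<longleftrightarrow> (\<forall>j. N < j \<longrightarrow> g j = 0)"
definition nz :: "(nat \<Rightarrow> complex) \<Rightarrow> bool" where
  "nz g \<longleftrightarrow> (\<exists>j. g j \<noteq> 0)"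
definition vanA :: "(nat \<Rightarrow> complex) \<Rightarrow> nat \<Rightarrow> complex \<Rightarrow> nat \<Rightarrow> bool" where
  "vanA g N t r \<longleftrightarrow> (\<forall>b<r. TC g N t b = 0)"
definition vanI :: "(nat \<Rightarrow> complex) \<Rightarrow> nat \<Rightarrow> nat \<Rightarrow> bool" where
  "vanI g N r \<longleftrightarrow> (\<forall>a<r. a \<le> N \<longrightarrow> g (N - a) = 0)"
definition van :: "(nat \<Rightarrow> complex) \<Rightarrow> nat \<Rightarrow> complex \<times> complex \<Rightarrow> nat \<Rightarrow> bool" where
  "van g N w r \<longleftrightarrow> (if fst w = 0 then vanI g N r else vanA g N (snd w) r)"
definition mulT :: "complex \<Rightarrow> (nat \<Rightarrow> complex) \<Rightarrow> nat \<Rightarrow> complex" where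
  "mulT t h j = (if j = 0 then 0 else h (j - 1)) - t * h j"

lemma van_1: "van g N (1, t) r \<longleftrightarrow> vanA g N t r" by (simp add: van_def)
lemma van_0: "van g N (0, 1) r \<longleftrightarrow> vanI g N r" by (simp add: van_def)

lemma van_mono: "van g N w r \<Longrightarrow> r' \<le> r \<Longrightarrow> van g N w r'"
  by (auto simp: van_def vanA_def vanI_def split: if_splits)

lemma pow_aux: "of_nat (j choose Suc b) * (s::complex) ^ (j - b) = s * (of_nat (j choose Suc b) * s ^ (j - Suc b))"
proof (cases "j \<le> b")
  case True then show ?thesis by (simp add: binomial_eq_0)
next
  case False
  then have "s ^ (j - b) = s * s ^ (j - Suc b)" by (metis Suc_diff_Suc not_le power_Suc)
  then show ?thesis by simp
qed

lemma TC_Suc_hg: "hg N h \<Longrightarrow> TC h (Suc N) s b = TC h N s b"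
  by (simp add: TC_def hg_def)

lemma TC_mulT_aux:
  assumes "hg N h"
  shows "TC (mulT t h) (Suc N) s b = (\<Sum>j\<le>N. h j * of_nat (Suc j choose b) * s ^ (Suc j - b)) - t * TC h N s b"
proof -
  have "TC (mulT t h) (Suc N) s b = (\<Sum>j\<le>Suc N. (if j = 0 then 0 else h (j - 1)) * of_nat (j choose b) * s ^ (j - b))
      - t * TC h (Suc N) s b"
    by (simp add: TC_def mulT_def algebra_simps sum_subtractf sum_distrib_left)
  also have "(\<Sum>j\<le>Suc N. (if j = 0 then 0 else h (j - 1)) * of_nat (j choose b) * s ^ (j - b)) =
     (\<Sum>j\<le>N. h j * of_nat (Suc j choose b) * s ^ (Suc j - b))"
    by (subst sum.atMost_Suc_shift) simp
  finally show ?thesis using TC_Suc_hg[OF assms] by simp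
qed

lemma TC_mulT_0:
  assumes "hg N h"
  shows "TC (mulT t h) (Suc N) s 0 = (s - t) * TC h N s 0"
  unfolding TC_mulT_aux[OF assms] by (simp add: TC_def sum_distrib_left algebra_simps sum_subtractf)

lemma TC_mulT_Suc:
  assumes "hg N h"
  shows "TC (mulT t h) (Suc N) s (Suc b) = TC h N s b + (s - t) * TC h N s (Suc b)"
proof -
  have "(\<Sum>j\<le>N. h j * of_nat (Suc j choose Suc b) * s ^ (Suc j - Suc b)) =
        (\<Sum>j\<le>N. h j * of_nat (j choose b) * s ^ (j - b) + h j * (of_nat (j choose Suc b) * s ^ (j - b)))"
    by (rule sum.cong) (simp_all add: algebra_simps)
  also have "\<dots> = TC h N s b + s * TC h N s (Suc b)"
    unfolding pow_aux by (simp add: TC_def sum.distrib sum_distrib_left algebra_simps)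
  finally show ?thesis unfolding TC_mulT_aux[OF assms] by (simp add: algebra_simps)
qed

lemma hg_mulT: "hg N h \<Longrightarrow> hg (Suc N) (mulT t h)"
  by (auto simp: hg_def mulT_def)

lemma vanA_mulT_other: "hg N h \<Longrightarrow> vanA h N s r \<Longrightarrow> vanA (mulT t h) (Suc N) s r"
  unfolding vanA_def
proof (intro allI impI)
  fix b assume "hg N h" "\<forall>b<r. TC h N s b = 0" "b < r"
  then show "TC (mulT t h) (Suc N) s b = 0"
    by (cases b) (auto simp: TC_mulT_0 TC_mulT_Suc)
qed

lemma vanA_mulT_same: "hg N h \<Longrightarrow> vanA h N t r \<Longrightarrow> vanA (mulT t h) (Suc N) t (Suc r)"
  unfolding vanA_def
proof (intro allI impI)
  fix b assume "hg N h" "\<forall>b<r. TC h N t b = 0" "b < Suc r"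
  then show "TC (mulT t h) (Suc N) t b = 0"
    by (cases b) (auto simp: TC_mulT_0 TC_mulT_Suc)
qed

lemma vanA_divT_other:
  assumes "hg N h" "s \<noteq> t" "vanA (mulT t h) (Suc N) s r"
  shows "vanA h N s r"
  unfolding vanA_def
proof (intro allI impI)
  fix b assume "b < r"
  then show "TC h N s b = 0"
  proof (induction b)
    case 0
    then have "(s - t) * TC h N s 0 = 0" using assms TC_mulT_0[OF assms(1)] unfolding vanA_def by metis
    then show ?case using assms(2) by simp
  next
    case (Suc b)
    then have "TC h N s b + (s - t) * TC h N s (Suc b) = 0"
      using assms TC_mulT_Suc[OF assms(1)] unfolding vanA_def by metis
    then show ?case using Suc assms(2) by simp
  qed
qed

lemma vanA_divT_same:
  assumes "hg N h" "vanA (mulT t h) (Suc N) t r"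
  shows "vanA h N t (r - 1)"
  unfolding vanA_def
proof (intro allI impI)
  fix b assume "b < r - 1"
  then have "TC (mulT t h) (Suc N) t (Suc b) = 0" using assms(2) unfolding vanA_def by auto
  then show "TC h N t b = 0" unfolding TC_mulT_Suc[OF assms(1)] by simp
qed

lemma vanI_mulT: "hg N h \<Longrightarrow> vanI h N r \<Longrightarrow> vanI (mulT t h) (Suc N) r"
  unfolding vanI_def
proof (intro allI impI)
  fix a assume h: "hg N h" "\<forall>a<r. a \<le> N \<longrightarrow> h (N - a) = 0" "a < r" "a \<le> Suc N"
  show "mulT t h (Suc N - a) = 0"
  proof (cases a)
    case 0
    then show ?thesis using h by (auto simp: mulT_def hg_def)
  next
    case (Suc a')
    have "h (Suc N - a) = 0" using h Suc by (auto simp: hg_def)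
    moreover have "a \<le> N \<Longrightarrow> h (N - a) = 0" using h by auto
    ultimately show ?thesis using Suc h by (auto simp: mulT_def Suc_diff_le)
  qed
qed

lemma vanI_divT:
  assumes "hg N h" "vanI (mulT t h) (Suc N) r"
  shows "vanI h N r"
  unfolding vanI_def
proof (intro allI impI)
  fix a assume "a < r" "a \<le> N"
  then show "h (N - a) = 0"
  proof (induction a)
    case 0
    have "mulT t h (Suc N - 0) = 0" using assms(2) 0 unfolding vanI_def by auto
    then show ?case using assms(1) by (simp add: mulT_def hg_def)
  next
    case (Suc a)
    have "mulT t h (Suc N - Suc a) = 0" using assms(2) Suc unfolding vanI_def by auto
    moreover have "h (Suc N - Suc a) = 0" using Suc by simp
    ultimately show ?case using Suc by (simp add: mulT_def Suc_diff_le)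
  qed
qed

lemma vanI_mulX: "hg N h \<Longrightarrow> vanI h N r \<Longrightarrow> vanI h (Suc N) (Suc r)"
  unfolding vanI_def
proof (intro allI impI)
  fix a assume h: "hg N h" "\<forall>a<r. a \<le> N \<longrightarrow> h (N - a) = 0" "a < Suc r" "a \<le> Suc N"
  then show "h (Suc N - a) = 0" by (cases a) (auto simp: hg_def)
qed

lemma vanI_divX: "vanI h (Suc N) r \<Longrightarrow> vanI h N (r - 1)"
  unfolding vanI_def
proof (intro allI impI)
  fix a assume h: "\<forall>a<r. a \<le> Suc N \<longrightarrow> h (Suc N - a) = 0" "a < r - 1" "a \<le> N"
  have "Suc a < r" "Suc a \<le> Suc N" using h by auto
  then have "h (Suc N - Suc a) = 0" using h(1) by blast
  then show "h (N - a) = 0" by simp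
qed

lemma nz_mulT:
  assumes "hg N h" "nz h" shows "nz (mulT t h)"
proof (rule ccontr)
  assume "\<not> nz (mulT t h)"
  then have z: "mulT t h j = 0" for j by (auto simp: nz_def)
  have rec: "h j = t * h (Suc j)" for j using z[of "Suc j"] by (simp add: mulT_def)
  have "\<forall>j. N < j + n \<longrightarrow> h j = 0" for n
  proof (induction n)
    case 0 then show ?case using assms(1) by (auto simp: hg_def)
  next
    case (Suc n)
    show ?case
    proof (intro allI impI)
      fix j assume "N < j + Suc n"
      then have "N < Suc j + n" by simp
      then have "h (Suc j) = 0" using Suc.IH by blast
      then show "h j = 0" using rec[of j] by simp
    qed
  qed
  then have "h j = 0" for j
  proof -
    assume A: "\<And>n. \<forall>j. N < j + n \<longrightarrow> h j = 0"
    have "N < j + Suc N" by simp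
    then show ?thesis using A[of "Suc N"] by blast
  qed
  then show False using assms(2) by (auto simp: nz_def)
qed

lemma nz_divT: assumes "nz (mulT t h)" shows "nz h"
proof (rule ccontr)
  assume "\<not> nz h"
  then have "h j = 0" for j by (auto simp: nz_def)
  then have "mulT t h j = 0" for j by (simp add: mulT_def)
  then show False using assms by (auto simp: nz_def)
qed

lemma pow_split: assumes "Suc m \<le> k" shows "(t::complex) ^ (k - m) = t * t ^ (k - Suc m)"
proof -
  have "k - m = Suc (k - Suc m)" using assms by arith
  then show ?thesis by simp
qed

lemma pow_split0: "Suc 0 \<le> k \<Longrightarrow> (t::complex) ^ k = t * t ^ (k - Suc 0)"
  using pow_split[of 0 k t] by simp

lemma divT_exists:
  assumes "hg (Suc N) g" "TC g (Suc N) t 0 = 0"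
  shows "\<exists>h. hg N h \<and> g = mulT t h"
proof -
  define h where "h j = (\<Sum>k\<in>{Suc j..Suc N}. g k * t ^ (k - Suc j))" for j
  have hgh: "hg N h" by (auto simp: hg_def h_def)
  have "g j = mulT t h j" for j
  proof (cases j)
    case 0
    have "TC g (Suc N) t 0 = (\<Sum>k\<in>{0..Suc N}. g k * t ^ k)" by (simp add: TC_def atLeast0AtMost)
    also have "\<dots> = g 0 + (\<Sum>k\<in>{Suc 0..Suc N}. g k * t ^ k)" by (subst sum.atLeast_Suc_atMost) auto
    also have "(\<Sum>k\<in>{Suc 0..Suc N}. g k * t ^ k) = t * h 0"
      unfolding h_def sum_distrib_left
      by (rule sum.cong) (auto simp: pow_split0)
    finally have "g 0 = - (t * h 0)" using assms(2) by (simp add: eq_neg_iff_add_eq_0)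
    then show ?thesis using 0 by (simp add: mulT_def)
  next
    case (Suc j')
    show ?thesis
    proof (cases "Suc j' \<le> Suc N")
      case True
      have "h j' = g (Suc j') + (\<Sum>k\<in>{Suc (Suc j')..Suc N}. g k * t ^ (k - Suc j'))"
        unfolding h_def using True by (subst sum.atLeast_Suc_atMost) auto
      moreover have "t * h (Suc j') = (\<Sum>k\<in>{Suc (Suc j')..Suc N}. g k * t ^ (k - Suc j'))"
        unfolding h_def sum_distrib_left
        by (rule sum.cong) (auto simp: pow_split)
      ultimately show ?thesis using Suc by (simp add: mulT_def)
    next
      case False
      then show ?thesis using Suc assms(1) by (auto simp: mulT_def h_def hg_def)
    qed
  qed
  then show ?thesis using hgh by blast
qed

lemma mul_dir:
  assumes "good w" "hg N h" "nz h"
  shows "\<exists>g. hg (Suc N) g \<and> nz g \<and> (\<forall>w' r. good w' \<longrightarrow> van h N w' r \<longrightarrow> van g (Suc N) w' (if w' = w then Suc r else r))"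
  using assms(1)
proof (rule goodE)
  fix t assume w: "w = (1, t)"
  show ?thesis
  proof (intro exI conjI allI impI)
    show "hg (Suc N) (mulT t h)" using hg_mulT[OF assms(2)] .
    show "nz (mulT t h)" using nz_mulT[OF assms(2,3)] .
    fix w' r assume gw: "good w'" "van h N w' r"
    show "van (mulT t h) (Suc N) w' (if w' = w then Suc r else r)"
      using gw(1)
    proof (rule goodE)
      fix s assume w': "w' = (1, s)"
      show ?thesis using gw(2) w w' vanA_mulT_other[OF assms(2)] vanA_mulT_same[OF assms(2)]
        by (auto simp: van_1)
    next
      assume w': "w' = (0, 1)"
      show ?thesis using gw(2) w w' vanI_mulT[OF assms(2)] by (auto simp: van_0)
    qed
  qed
next
  assume w: "w = (0, 1)"
  show ?thesis
  proof (intro exI conjI allI impI)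
    show "hg (Suc N) h" using assms(2) by (auto simp: hg_def)
    show "nz h" by fact
    fix w' r assume gw: "good w'" "van h N w' r"
    show "van h (Suc N) w' (if w' = w then Suc r else r)"
      using gw(1)
    proof (rule goodE)
      fix s assume w': "w' = (1, s)"
      show ?thesis using gw(2) w w' TC_Suc_hg[OF assms(2)] by (auto simp: van_1 vanA_def)
    next
      assume w': "w' = (0, 1)"
      show ?thesis using gw(2) w w' vanI_mulX[OF assms(2)] by (auto simp: van_0)
    qed
  qed
qed

lemma div_dir:
  assumes "good w" "hg (Suc N) g" "nz g" "van g (Suc N) w 1"
  shows "\<exists>h. hg N h \<and> nz h \<and> (\<forall>w' r. good w' \<longrightarrow> van g (Suc N) w' r \<longrightarrow> van h N w' (if w' = w then r - 1 else r))"
  using assms(1)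
proof (rule goodE)
  fix t assume w: "w = (1, t)"
  have "TC g (Suc N) t 0 = 0" using assms(4) w by (auto simp: van_1 vanA_def)
  then obtain h where h: "hg N h" "g = mulT t h" using divT_exists[OF assms(2)] by blast
  show ?thesis
  proof (intro exI conjI allI impI)
    show "hg N h" by fact
    show "nz h" using nz_divT assms(3) h(2) by blast
    fix w' r assume gw: "good w'" "van g (Suc N) w' r"
    show "van h N w' (if w' = w then r - 1 else r)"
      using gw(1)
    proof (rule goodE)
      fix s assume w': "w' = (1, s)"
      show ?thesis using gw(2) w w' vanA_divT_other[OF h(1)] vanA_divT_same[OF h(1)] h(2)
        by (auto simp: van_1)
    next
      assume w': "w' = (0, 1)"
      show ?thesis using gw(2) w w' vanI_divT[OF h(1)] h(2) by (auto simp: van_0)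
    qed
  qed
next
  assume w: "w = (0, 1)"
  have "g (Suc N) = 0" using assms(4) w by (auto simp: van_0 vanI_def)
  then have hgg: "hg N g" using assms(2) unfolding hg_def
    by (metis Suc_lessI)
  show ?thesis
  proof (intro exI conjI allI impI)
    show "hg N g" by fact
    show "nz g" by fact
    fix w' r assume gw: "good w'" "van g (Suc N) w' r"
    show "van g N w' (if w' = w then r - 1 else r)"
      using gw(1)
    proof (rule goodE)
      fix s assume w': "w' = (1, s)"
      show ?thesis using gw(2) w w' TC_Suc_hg[OF hgg] by (auto simp: van_1 vanA_def)
    next
      assume w': "w' = (0, 1)"
      show ?thesis using gw(2) w w' vanI_divX by (auto simp: van_0)
    qed
  qed
qed

lemma van_zero:
  assumes "hg N g" "good w" "van g N w r" "N < r"
  shows "\<not> nz g"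
  using assms
proof (induction N arbitrary: g r)
  case 0
  have "g 0 = 0"
    using 0(2)
  proof (rule goodE)
    fix t assume "w = (1, t)"
    then show "g 0 = 0" using 0 by (auto simp: van_1 vanA_def TC_def)
  next
    assume "w = (0, 1)"
    then show "g 0 = 0" using 0 by (auto simp: van_0 vanI_def)
  qed
  then show ?case using 0(1) by (auto simp: nz_def hg_def) (metis neq0_conv)
next
  case (Suc N)
  show ?case
  proof
    assume nzg: "nz g"
    have "van g (Suc N) w 1" using van_mono[OF Suc(4)] Suc(5) by simp
    then obtain h where h: "hg N h" "nz h"
      "\<forall>w' r. good w' \<longrightarrow> van g (Suc N) w' r \<longrightarrow> van h N w' (if w' = w then r - 1 else r)"
      using div_dir[OF Suc(3) Suc(2) nzg] by blast
    have "van h N w (r - 1)" using h(3)[rule_format, OF Suc(3) Suc(4)] by simp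
    then have "\<not> nz h" using Suc.IH[OF h(1) Suc(3)] Suc(5) by simp
    then show False using h(2) by simp
  qed
qed

lemma divk:
  assumes "good w" "hg (N + k) g" "nz g" "van g (N + k) w k"
  shows "\<exists>h. hg N h \<and> nz h \<and> (\<forall>w' r. good w' \<longrightarrow> van g (N + k) w' r \<longrightarrow> van h N w' (if w' = w then r - k else r))"
  using assms(2-4)
proof (induction k arbitrary: g)
  case 0
  show ?case
  proof (intro exI conjI allI impI)
    show "hg N g" using 0 by simp
    show "nz g" using 0 by simp
    fix w' r assume "good w'" "van g (N + 0) w' r"
    then show "van g N w' (if w' = w then r - 0 else r)" by (cases "w' = w") simp_all
  qed
next
  case (Suc k)
  have hs: "hg (Suc (N + k)) g" using Suc(2) by simp
  have "van g (Suc (N + k)) w 1" using van_mono[OF Suc(4)] by simp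
  from div_dir[OF assms(1) hs Suc(3) this]
  obtain h1 where h1: "hg (N + k) h1" "nz h1"
      "\<forall>w' r. good w' \<longrightarrow> van g (Suc (N + k)) w' r \<longrightarrow> van h1 (N + k) w' (if w' = w then r - 1 else r)"
    by blast
  have "van g (Suc (N + k)) w (Suc k)" using Suc(4) by simp
  then have "van h1 (N + k) w (if w = w then Suc k - 1 else Suc k)" by (rule h1(3)[rule_format, OF assms(1)])
  then have "van h1 (N + k) w k" by simp
  from Suc.IH[OF h1(1,2) this]
  obtain h where h: "hg N h" "nz h"
      "\<forall>w' r. good w' \<longrightarrow> van h1 (N + k) w' r \<longrightarrow> van h N w' (if w' = w then r - k else r)"
    by blast
  show ?case
  proof (intro exI conjI allI impI)
    show "hg N h" "nz h" by (fact h(1)) (fact h(2))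
    fix w' r assume gw: "good w'" "van g (N + Suc k) w' r"
    then have "van g (Suc (N + k)) w' r" by simp
    then have A: "van h1 (N + k) w' (if w' = w then r - 1 else r)" by (rule h1(3)[rule_format, OF gw(1)])
    show "van h N w' (if w' = w then r - Suc k else r)"
    proof (cases "w' = w")
      case True
      then have "van h1 (N + k) w' (r - 1)" using A by simp
      then have "van h N w' (if w' = w then r - 1 - k else r - 1)" by (rule h(3)[rule_format, OF gw(1)])
      then show ?thesis using True by simp
    next
      case False
      then have "van h1 (N + k) w' r" using A by simp
      then have "van h N w' (if w' = w then r - k else r)" by (rule h(3)[rule_format, OF gw(1)])
      then show ?thesis using False by simp
    qed
  qed
qed

lemma mulk:
  assumes "good w" "hg N h" "nz h"
  shows "\<exists>g. hg (N + k) g \<and> nz g \<and> (\<forall>w' r. good w' \<longrightarrow> van h N w' r \<longrightarrow> van g (N + k) w' (if w' = w then r + k else r))"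
proof (induction k)
  case 0
  show ?case
  proof (intro exI conjI allI impI)
    show "hg (N + 0) h" using assms by simp
    show "nz h" using assms by simp
    fix w' r assume "good w'" "van h N w' r"
    then show "van h (N + 0) w' (if w' = w then r + 0 else r)" by (cases "w' = w") simp_all
  qed
next
  case (Suc k)
  then obtain g1 where g1: "hg (N + k) g1" "nz g1"
    "\<forall>w' r. good w' \<longrightarrow> van h N w' r \<longrightarrow> van g1 (N + k) w' (if w' = w then r + k else r)" by blast
  from mul_dir[OF assms(1) g1(1,2)]
  obtain g where g: "hg (Suc (N + k)) g" "nz g"
    "\<forall>w' r. good w' \<longrightarrow> van g1 (N + k) w' r \<longrightarrow> van g (Suc (N + k)) w' (if w' = w then Suc r else r)"
    by blast
  show ?case
  proof (intro exI conjI allI impI)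
    show "hg (N + Suc k) g" using g(1) by simp
    show "nz g" by (fact g(2))
    fix w' r assume gw: "good w'" "van h N w' r"
    have A: "van g1 (N + k) w' (if w' = w then r + k else r)" by (rule g1(3)[rule_format, OF gw(1) gw(2)])
    show "van g (N + Suc k) w' (if w' = w then r + Suc k else r)"
    proof (cases "w' = w")
      case True
      then have "van g1 (N + k) w' (r + k)" using A by simp
      then have "van g (Suc (N + k)) w' (if w' = w then Suc (r + k) else r + k)" by (rule g(3)[rule_format, OF gw(1)])
      then show ?thesis using True by simp
    next
      case False
      then have "van g1 (N + k) w' r" using A by simp
      then have "van g (Suc (N + k)) w' (if w' = w then Suc r else r)" by (rule g(3)[rule_format, OF gw(1)])
      then show ?thesis using False by simp
    qed
  qed
qed



definition binary :: "nat \<Rightarrow> (nat \<Rightarrow> nat \<Rightarrow> complex) \<Rightarrow> bool" where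
  "binary N c \<longleftrightarrow> (\<forall>i j. i + j \<noteq> N \<longrightarrow> c i j = 0)"
definition emb :: "nat \<Rightarrow> (nat \<Rightarrow> complex) \<Rightarrow> nat \<Rightarrow> nat \<Rightarrow> complex" where
  "emb N g i j = (if i + j = N then g j else 0)"
definition dirp :: "complex \<times> complex \<times> complex \<Rightarrow> complex \<times> complex" where
  "dirp p = (fst p, fst (snd p))"

lemma binary_hg: "binary N c \<Longrightarrow> hg N (lev c N)"
  by (auto simp: binary_def hg_def lev_def)
lemma binary_nz: "binary N c \<Longrightarrow> c i j \<noteq> 0 \<Longrightarrow> nz (lev c N)"
  unfolding binary_def nz_def lev_def by (metis add_diff_cancel_right')
lemma lev_emb: "hg N g \<Longrightarrow> lev (emb N g) N = g"
  by (auto simp: fun_eq_iff lev_def emb_def hg_def)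
lemma binary_emb: "binary N (emb N g)"
  by (simp add: binary_def emb_def)
lemma sect_emb:
  assumes "hg (3 * d) g" "nz g" shows "sect d (emb (3 * d) g)"
proof -
  obtain j where j: "g j \<noteq> 0" using assms(2) by (auto simp: nz_def)
  then have "j \<le> 3 * d" using assms(1) by (auto simp: hg_def not_le[symmetric])
  then have "emb (3 * d) g (3 * d - j) j \<noteq> 0" using j by (simp add: emb_def)
  moreover have "\<forall>i j. 3 * d < i + j \<longrightarrow> emb (3 * d) g i j = 0" by (simp add: emb_def)
  moreover have "\<forall>i j. i + j < d \<longrightarrow> emb (3 * d) g i j = 0" by (simp add: emb_def)
  ultimately show ?thesis unfolding sect_def by blast
qed

lemma good_dirp: "norm3 p \<Longrightarrow> p \<noteq> P1 \<Longrightarrow> good (dirp p)"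
  by (cases p) (auto simp: norm3_def P1_def good_def dirp_def)

lemma BE1:
  assumes "binary (3 * d) c"
  shows "taylorE d c (1, t) a b = (if a = 2 * d then TC (lev c (3 * d)) (3 * d) t b else 0)"
proof (cases "a = 2 * d")
  case True
  then show ?thesis by (simp add: tE1)
next
  case False
  then show ?thesis using assms by (auto simp: tE1 TC_def lev_def binary_def intro!: sum.neutral)
qed

lemma BE0:
  assumes "binary (3 * d) c"
  shows "taylorE d c (0, 1) a b = (if b = 2 * d \<and> a \<le> 3 * d then lev c (3 * d) (3 * d - a) else 0)"
  using assms by (auto simp: tE0 lev_def binary_def)

lemma exM_bin:
  assumes "binary (3 * d) c" "good l"
  shows "exM d c l M \<longleftrightarrow> van (lev c (3 * d)) (3 * d) l (M - 2 * d)"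
  using assms(2)
proof (rule goodE)
  fix t assume l: "l = (1, t)"
  show ?thesis unfolding l exM_def BE1[OF assms(1)] van_1 vanA_def
  proof
    assume A: "\<forall>a b. a + b < M \<longrightarrow> (if a = 2 * d then TC (lev c (3 * d)) (3 * d) t b else 0) = 0"
    show "\<forall>b<M - 2 * d. TC (lev c (3 * d)) (3 * d) t b = 0"
    proof (intro allI impI)
      fix b assume "b < M - 2 * d"
      then have "2 * d + b < M" by simp
      then show "TC (lev c (3 * d)) (3 * d) t b = 0" using A by fastforce
    qed
  next
    assume A: "\<forall>b<M - 2 * d. TC (lev c (3 * d)) (3 * d) t b = 0"
    show "\<forall>a b. a + b < M \<longrightarrow> (if a = 2 * d then TC (lev c (3 * d)) (3 * d) t b else 0) = 0"
      using A by auto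
  qed
next
  assume l: "l = (0, 1)"
  show ?thesis unfolding l exM_def BE0[OF assms(1)] van_0 vanI_def
  proof
    assume A: "\<forall>a b. a + b < M \<longrightarrow> (if b = 2 * d \<and> a \<le> 3 * d then lev c (3 * d) (3 * d - a) else 0) = 0"
    show "\<forall>a<M - 2 * d. a \<le> 3 * d \<longrightarrow> lev c (3 * d) (3 * d - a) = 0"
    proof (intro allI impI)
      fix a assume "a < M - 2 * d" "a \<le> 3 * d"
      then have "a + 2 * d < M" by simp
      then show "lev c (3 * d) (3 * d - a) = 0" using A \<open>a \<le> 3 * d\<close> by fastforce
    qed
  next
    assume A: "\<forall>a<M - 2 * d. a \<le> 3 * d \<longrightarrow> lev c (3 * d) (3 * d - a) = 0"
    show "\<forall>a b. a + b < M \<longrightarrow> (if b = 2 * d \<and> a \<le> 3 * d then lev c (3 * d) (3 * d - a) else 0) = 0"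
      using A by auto
  qed
qed

definition Bi :: "(nat \<Rightarrow> nat \<Rightarrow> complex) \<Rightarrow> nat \<Rightarrow> complex \<Rightarrow> nat \<Rightarrow> nat \<Rightarrow> complex" where
  "Bi c N q a b = (\<Sum>i\<le>N. c i (N - i) * of_nat (i choose a) * of_nat ((N - i) choose b) * q ^ (N - i - b))"

lemma T3_bin:
  assumes "binary N c"
  shows "T3 N c (p0, p1, p2) a b e = (if e = 0 then
     (\<Sum>i\<le>N. c i (N - i) * of_nat (i choose a) * of_nat ((N - i) choose b) * p0 ^ (i - a) * p1 ^ (N - i - b)) else 0)"
proof -
  have inner: "(\<Sum>j\<le>N - i. c i j * of_nat (i choose a) * of_nat (j choose b) * of_nat ((N - i - j) choose e)
        * p0 ^ (i - a) * p1 ^ (j - b) * p2 ^ (N - i - j - e)) =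
     (if e = 0 then c i (N - i) * of_nat (i choose a) * of_nat ((N - i) choose b) * p0 ^ (i - a) * p1 ^ (N - i - b) else 0)"
    if "i \<le> N" for i
  proof -
    have "(\<Sum>j\<le>N - i. c i j * of_nat (i choose a) * of_nat (j choose b) * of_nat ((N - i - j) choose e)
        * p0 ^ (i - a) * p1 ^ (j - b) * p2 ^ (N - i - j - e)) =
      (\<Sum>j\<le>N - i. if j = N - i then (if e = 0 then c i (N - i) * of_nat (i choose a) * of_nat ((N - i) choose b) * p0 ^ (i - a) * p1 ^ (N - i - b) else 0) else 0)"
      by (rule sum.cong) (use assms that in \<open>auto simp: binary_def\<close>)
    also have "\<dots> = (if e = 0 then c i (N - i) * of_nat (i choose a) * of_nat ((N - i) choose b) * p0 ^ (i - a) * p1 ^ (N - i - b) else 0)"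
      by (simp add: sum.delta)
    finally show ?thesis .
  qed
  have "T3 N c (p0, p1, p2) a b e = (\<Sum>i\<le>N. (if e = 0 then c i (N - i) * of_nat (i choose a) * of_nat ((N - i) choose b) * p0 ^ (i - a) * p1 ^ (N - i - b) else 0))"
    unfolding T3_def prod.case by (rule sum.cong[OF refl], rule inner) simp
  then show ?thesis by (cases "e = 0") simp_all
qed

lemma T3_bin1:
  assumes "binary N c"
  shows "T3 N c (1, q, p2) a b e = (if e = 0 then Bi c N q a b else 0)"
  unfolding T3_bin[OF assms] Bi_def by simp

lemma T3_bin0:
  assumes "binary N c"
  shows "T3 N c (0, 1, p2) a b e = (if e = 0 \<and> a \<le> N then lev c N (N - a) * of_nat ((N - a) choose b) else 0)"
proof -
  have "(\<Sum>i\<le>N. c i (N - i) * of_nat (i choose a) * of_nat ((N - i) choose b) * 0 ^ (i - a) * 1 ^ (N - i - b)) =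
        (\<Sum>i\<le>N. if i = a then c a (N - a) * of_nat ((N - a) choose b) else (0::complex))"
    by (rule sum.cong) auto
  also have "\<dots> = (if a \<le> N then c a (N - a) * of_nat ((N - a) choose b) else 0)"
    by (simp add: sum.delta)
  finally show ?thesis unfolding T3_bin[OF assms] by (auto simp: lev_def)
qed

lemma Bi_TC: "Bi c N q 0 b = TC (lev c N) N q b"
  unfolding Bi_def TC_def lev_def
  by (rule sum.reindex_bij_witness[where i="\<lambda>j. N - j" and j="\<lambda>i. N - i"]) auto

lemma choose_aux4: "of_nat (Suc a) * of_nat (i choose Suc a) = (of_nat (i - a) * of_nat (i choose a) :: complex)"
proof (cases "i \<le> a")
  case True then show ?thesis by (simp add: binomial_eq_0)
next
  case False
  have e: "Suc a * (i choose Suc a) = (i - a) * (i choose a)"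
    using times_binomial_minus1_eq[of "Suc a" i] binomial_absorb_comp[of i a] by simp
  have "(of_nat (Suc a * (i choose Suc a)) :: complex) = of_nat ((i - a) * (i choose a))"
    using e by simp
  then show ?thesis by (simp only: of_nat_mult)
qed

lemma choose_aux5: "of_nat (Suc b) * of_nat (n choose Suc b) * q * q ^ (n - Suc b) =
   of_nat (n - b) * of_nat (n choose b) * (q::complex) ^ (n - b)"
proof (cases "n \<le> b")
  case True then show ?thesis by (simp add: binomial_eq_0)
next
  case False
  then have "q ^ (n - b) = q * q ^ (n - Suc b)" by (intro pow_split) simp
  then show ?thesis using choose_aux4[of b n] by (simp add: algebra_simps)
qed

lemma Bi_euler:
  "of_nat (Suc a) * Bi c N q (Suc a) b + of_nat (Suc b) * q * Bi c N q a (Suc b) = of_nat (N - a - b) * Bi c N q a b"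
proof -
  have "of_nat (Suc a) * (c i (N - i) * of_nat (i choose Suc a) * of_nat ((N - i) choose b) * q ^ (N - i - b)) +
        of_nat (Suc b) * q * (c i (N - i) * of_nat (i choose a) * of_nat ((N - i) choose Suc b) * q ^ (N - i - Suc b)) =
        of_nat (N - a - b) * (c i (N - i) * of_nat (i choose a) * of_nat ((N - i) choose b) * q ^ (N - i - b))"
    if "i \<le> N" for i
  proof -
    have 1: "of_nat (Suc a) * (c i (N - i) * of_nat (i choose Suc a) * of_nat ((N - i) choose b) * q ^ (N - i - b)) =
        of_nat (i - a) * (c i (N - i) * of_nat (i choose a) * of_nat ((N - i) choose b) * q ^ (N - i - b))"
    proof -
      define W where "W = c i (N - i) * of_nat ((N - i) choose b) * q ^ (N - i - b)"
      have "of_nat (Suc a) * (c i (N - i) * of_nat (i choose Suc a) * of_nat ((N - i) choose b) * q ^ (N - i - b)) =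
        (of_nat (Suc a) * of_nat (i choose Suc a)) * W" unfolding W_def by (simp only: mult_ac)
      also have "\<dots> = (of_nat (i - a) * of_nat (i choose a)) * W" by (simp only: choose_aux4)
      finally show ?thesis unfolding W_def by (simp only: mult_ac)
    qed
    have 2: "of_nat (Suc b) * q * (c i (N - i) * of_nat (i choose a) * of_nat ((N - i) choose Suc b) * q ^ (N - i - Suc b)) =
        of_nat (N - i - b) * (c i (N - i) * of_nat (i choose a) * of_nat ((N - i) choose b) * q ^ (N - i - b))"
    proof -
      define W where "W = c i (N - i) * of_nat (i choose a)"
      have "of_nat (Suc b) * q * (c i (N - i) * of_nat (i choose a) * of_nat ((N - i) choose Suc b) * q ^ (N - i - Suc b)) =
        (of_nat (Suc b) * of_nat ((N - i) choose Suc b) * q * q ^ (N - i - Suc b)) * W" unfolding W_def by (simp only: mult_ac)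
      also have "\<dots> = (of_nat (N - i - b) * of_nat ((N - i) choose b) * q ^ (N - i - b)) * W" by (simp only: choose_aux5)
      finally show ?thesis unfolding W_def by (simp only: mult_ac)
    qed
    show ?thesis
    proof (cases "a \<le> i \<and> b \<le> N - i")
      case True
      then have "(of_nat (i - a) + of_nat (N - i - b) :: complex) = of_nat (N - a - b)"
      proof -
        have "i - a + (N - i - b) = N - a - b" using True that by arith
        then have "(of_nat (i - a + (N - i - b)) :: complex) = of_nat (N - a - b)" by (simp only:)
        then show ?thesis by (simp only: of_nat_add)
      qed
      then show ?thesis unfolding 1 2 distrib_right[symmetric] by (rule arg_cong)
    next
      case False
      then have "(i choose a) = 0 \<or> ((N - i) choose b) = 0" by (auto simp: binomial_eq_0)
      then show ?thesis unfolding 1 2 by auto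
    qed
  qed
  then show ?thesis unfolding Bi_def
    by (simp add: sum_distrib_left flip: sum.distrib)
qed

lemma Bi_van:
  assumes "vanA (lev c N) N q M"
  shows "a + b < M \<Longrightarrow> Bi c N q a b = 0"
proof (induction a arbitrary: b)
  case 0
  then show ?case using assms by (simp add: Bi_TC vanA_def)
next
  case (Suc a)
  have "Bi c N q a b = 0" "Bi c N q a (Suc b) = 0" using Suc by auto
  then have "of_nat (Suc a) * Bi c N q (Suc a) b = 0" using Bi_euler[of a c N q b] by simp
  then show ?case by simp
qed

lemma offM_bin:
  assumes "binary N c" "good (p0, p1)"
  shows "offM N c (p0, p1, p2) M \<longleftrightarrow> van (lev c N) N (p0, p1) M"
  using assms(2)
proof (rule goodE)
  assume "(p0, p1) = (0, 1)"
  then have p: "p0 = 0" "p1 = 1" by auto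
  show ?thesis unfolding p van_0 offM_def vanI_def T3_bin0[OF assms(1)]
  proof
    assume A: "\<forall>a b e. a + b + e < M \<longrightarrow> (if e = 0 \<and> a \<le> N then lev c N (N - a) * of_nat ((N - a) choose b) else 0) = 0"
    show "\<forall>a<M. a \<le> N \<longrightarrow> lev c N (N - a) = 0"
    proof (intro allI impI)
      fix a assume "a < M" "a \<le> N"
      then show "lev c N (N - a) = 0" using A[rule_format, of a 0 0] by simp
    qed
  next
    assume A: "\<forall>a<M. a \<le> N \<longrightarrow> lev c N (N - a) = 0"
    show "\<forall>a b e. a + b + e < M \<longrightarrow> (if e = 0 \<and> a \<le> N then lev c N (N - a) * of_nat ((N - a) choose b) else 0) = 0"
      using A by auto
  qed
next
  fix t assume "(p0, p1) = (1, t)"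
  then have p: "p0 = 1" "p1 = t" by auto
  show ?thesis unfolding p van_1 offM_def T3_bin1[OF assms(1)]
  proof
    assume A: "\<forall>a b e. a + b + e < M \<longrightarrow> (if e = 0 then Bi c N t a b else 0) = 0"
    show "vanA (lev c N) N t M" unfolding vanA_def
    proof (intro allI impI)
      fix b assume "b < M"
      then show "TC (lev c N) N t b = 0" using A[rule_format, of 0 b 0] by (simp add: Bi_TC)
    qed
  next
    assume A: "vanA (lev c N) N t M"
    show "\<forall>a b e. a + b + e < M \<longrightarrow> (if e = 0 then Bi c N t a b else 0) = 0"
      using Bi_van[OF A] by auto
  qed
qed

lemma mult_ge_bin_Off:
  assumes "binary (3 * d) c" "norm3 p" "p \<noteq> P1"
  shows "mult_ge d c (Off p) M \<longleftrightarrow> van (lev c (3 * d)) (3 * d) (dirp p) M"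
proof -
  obtain p0 p1 p2 where p: "p = (p0, p1, p2)" by (cases p) auto
  have "good (p0, p1)" using good_dirp[OF assms(2,3)] p by (simp add: dirp_def)
  then show ?thesis unfolding mult_ge_Off p dirp_def using offM_bin[OF assms(1)] by simp
qed

lemma mult_ge_bin_Exc:
  assumes "binary (3 * d) c" "norm2 l"
  shows "mult_ge d c (Exc l) M \<longleftrightarrow> van (lev c (3 * d)) (3 * d) l (M - 2 * d)"
  unfolding mult_ge_Exc using exM_bin[OF assms(1) norm2_good[OF assms(2)]] .



lemma van_zero_r: "van g N w 0"
  by (simp add: van_def vanA_def vanI_def)

lemma binary_D: "isD X \<Longrightarrow> binary (Suc N) c \<Longrightarrow> binary N (X c)"
  unfolding isD_def binary_def dx_def dy_def by auto

lemma trans_DDD: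
  assumes "high (3 * d' + 3) c" "binary (3 * d' + 3) c" "isD X1" "isD X2" "isD X3" "m \<le> 2 * d'"
  shows "trfm d' c (X3 (X2 (X1 c))) m"
proof -
  let ?c1 = "X1 c" let ?c2 = "X2 ?c1" let ?c3 = "X3 ?c2"
  have h1: "high (3 * d' + 2) ?c1" using isD_high[OF assms(3) assms(1)] by simp
  have h2: "high (3 * d' + 1) ?c2" using isD_high[OF assms(4) h1] by simp
  have h3: "high (3 * d') ?c3" using isD_high[OF assms(5) h2] by simp
  have "Suc (3 * d' + 2) = 3 * d' + 3" by simp
  then have "binary (Suc (3 * d' + 2)) c" using assms(2) by metis
  then have b1: "binary (3 * d' + 2) ?c1" by (rule binary_D[OF assms(3)])
  then have "binary (Suc (3 * d' + 1)) ?c1" by simp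
  then have b2: "binary (3 * d' + 1) ?c2" by (rule binary_D[OF assms(4)])
  then have "binary (Suc (3 * d')) ?c2" by simp
  then have b3: "binary (3 * d') ?c3" by (rule binary_D[OF assms(5)])
  have l3: "low d' ?c3" using b3 by (auto simp: binary_def low_def)
  have off: "offM (3 * d') ?c3 p m" if "offM (3 * d' + 3) c p (m + 3)" for p
  proof -
    have "offM (3 * d' + 2) ?c1 p (m + 2)" using isD_offM[OF assms(3) assms(1) that] by simp
    then have "offM (3 * d' + 1) ?c2 p (m + 1)" using isD_offM[OF assms(4) h1] by fastforce
    then show ?thesis using isD_offM[OF assms(5) h2] by fastforce
  qed
  have ex: "exM d' ?c3 l m" if "good l" for l
  proof -
    have "m - 2 * d' = 0" using assms(6) by simp
    then show ?thesis using exM_bin[OF b3 that] van_zero_r by simp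
  qed
  show ?thesis unfolding trfm_def using h3 l3 off ex by auto
qed

lemma from_h:
  assumes "hg (3 * d') h" "nz h" "Z \<subseteq> S1"
    "\<forall>p. Off p \<in> Z \<longrightarrow> van h (3 * d') (dirp p) m"
    "\<forall>l. Exc l \<in> Z \<longrightarrow> van h (3 * d') l (m - 2 * d')"
  shows "\<exists>c'. sect d' c' \<and> (\<forall>Q\<in>Z. mult_ge d' c' Q m)"
proof (intro exI conjI ballI)
  show "sect d' (emb (3 * d') h)" using sect_emb[OF assms(1,2)] .
  fix Q assume Q: "Q \<in> Z"
  then have QS: "Q \<in> S1" using assms(3) by auto
  have b: "binary (3 * d') (emb (3 * d') h)" by (rule binary_emb)
  have lv: "lev (emb (3 * d') h) (3 * d') = h" by (rule lev_emb[OF assms(1)])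
  show "mult_ge d' (emb (3 * d') h) Q m"
  proof (cases rule: S1_cases[OF QS])
    case (1 p)
    have "van h (3 * d') (dirp p) m" using assms(4) Q unfolding 1(1) by blast
    then show ?thesis using mult_ge_bin_Off[OF b 1(2,3)] lv 1(1) by simp
  next
    case (2 l)
    have "van h (3 * d') l (m - 2 * d')" using assms(5) Q unfolding 2(1) by blast
    then show ?thesis using mult_ge_bin_Exc[OF b 2(2)] lv 2(1) by simp
  qed
qed

lemma to_g:
  assumes "binary (3 * d) c" "Z \<subseteq> S1" "\<forall>Q\<in>Z. mult_ge d c Q M"
  shows "\<forall>p. Off p \<in> Z \<longrightarrow> van (lev c (3 * d)) (3 * d) (dirp p) M"
    and "\<forall>l. Exc l \<in> Z \<longrightarrow> van (lev c (3 * d)) (3 * d) l (M - 2 * d)"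
proof (intro allI impI)
  fix p assume p: "Off p \<in> Z"
  then have "Off p \<in> S1" using assms(2) by auto
  then have "norm3 p" "p \<noteq> P1" by (auto simp: S1_def)
  then show "van (lev c (3 * d)) (3 * d) (dirp p) M" using mult_ge_bin_Off[OF assms(1)] assms(3) p by blast
next
  show "\<forall>l. Exc l \<in> Z \<longrightarrow> van (lev c (3 * d)) (3 * d) l (M - 2 * d)"
  proof (intro allI impI)
    fix l assume l: "Exc l \<in> Z"
    then have "Exc l \<in> S1" using assms(2) by auto
    then have "norm2 l" by (auto simp: S1_def)
    then show "van (lev c (3 * d)) (3 * d) l (M - 2 * d)" using mult_ge_bin_Exc[OF assms(1)] assms(3) l by blast
  qed
qed

lemma nz_choice3:
  assumes "c i j \<noteq> 0" "i + j = 3 * d' + 3"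
  shows "\<exists>X1 X2 X3 i' j'. isD X1 \<and> isD X2 \<and> isD X3 \<and> X3 (X2 (X1 c)) i' j' \<noteq> 0"
proof -
  consider (a) "3 \<le> i" | (b) "i = 2" | (c) "i = 1" | (d) "i = 0" by linarith
  then show ?thesis
  proof cases
    case a
    define i' where "i' = i - 3"
    have i': "i = Suc (Suc (Suc i'))" using a unfolding i'_def by arith
    have "dx (dx (dx c)) i' j \<noteq> 0"
      unfolding dx_def mult_eq_0_iff of_nat_eq_0_iff de_Morgan_disj using assms i' by simp
    then show ?thesis using isD_dx by blast
  next
    case b
    then obtain j' where j': "j = Suc j'" using assms(2) by (cases j) auto
    have "dy (dx (dx c)) 0 j' \<noteq> 0"
      unfolding dx_def dy_def mult_eq_0_iff of_nat_eq_0_iff de_Morgan_disj using assms b j'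
      by (simp add: numeral_2_eq_2)
    then show ?thesis using isD_dx isD_dy by blast
  next
    case c
    then obtain j' where j': "j = Suc (Suc j')" using assms(2) by (cases j; cases "j - 1") auto
    have "dy (dy (dx c)) 0 j' \<noteq> 0"
      unfolding dx_def dy_def mult_eq_0_iff of_nat_eq_0_iff de_Morgan_disj using assms c j'
      by simp
    then show ?thesis using isD_dx isD_dy by blast
  next
    case d
    define j' where "j' = j - 3"
    have j': "j = Suc (Suc (Suc j'))" using d assms(2) unfolding j'_def by arith
    have "dy (dy (dy c)) 0 j' \<noteq> 0"
      unfolding dy_def mult_eq_0_iff of_nat_eq_0_iff de_Morgan_disj using assms d j'
      by simp
    then show ?thesis using isD_dy by blast
  qed
qed



definition exceptional :: "s1pt set \<Rightarrow> bool" where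
  "exceptional Z \<longleftrightarrow> (\<exists>Q. Q \<in> E1 \<and> Z = {Q}) \<or> (\<exists>Q1 Q2. Q1 \<in> E1 \<and> Q2 \<in> E1 \<and> Q1 \<noteq> Q2 \<and> Z = {Q1, Q2})"

lemma three_exc:
  assumes "Z \<subseteq> S1" "Z \<noteq> {}" "\<not> exceptional Z" "\<forall>p. Off p \<notin> Z"
  shows "\<exists>l1 l2 l3. Exc l1 \<in> Z \<and> Exc l2 \<in> Z \<and> Exc l3 \<in> Z \<and> l1 \<noteq> l2 \<and> l1 \<noteq> l3 \<and> l2 \<noteq> l3"
proof -
  have inE: "Q \<in> E1" if "Q \<in> Z" for Q
  proof (cases Q)
    case (Off p) then show ?thesis using assms(4)[rule_format, of p] that by simp
  next
    case (Exc l) then show ?thesis using assms(1) that by (auto simp: S1_def E1_def)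
  qed
  obtain Q1 where Q1: "Q1 \<in> Z" using assms(2) by auto
  have "Z \<noteq> {Q1}" using assms(3) inE[OF Q1] unfolding exceptional_def by blast
  then obtain Q2 where Q2: "Q2 \<in> Z" "Q2 \<noteq> Q1" using Q1 by blast
  have "Z \<noteq> {Q1, Q2}" using assms(3) inE[OF Q1] inE[OF Q2(1)] Q2(2) unfolding exceptional_def by blast
  then obtain Q3 where Q3: "Q3 \<in> Z" "Q3 \<noteq> Q1" "Q3 \<noteq> Q2" using Q1 Q2 by blast
  obtain l1 where l1: "Q1 = Exc l1" using inE[OF Q1] by (auto simp: E1_def)
  obtain l2 where l2: "Q2 = Exc l2" using inE[OF Q2(1)] by (auto simp: E1_def)
  obtain l3 where l3: "Q3 = Exc l3" using inE[OF Q3(1)] by (auto simp: E1_def)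
  show ?thesis using Q1 Q2 Q3 l1 l2 l3 by blast
qed

lemma good_of_Exc: "Z \<subseteq> S1 \<Longrightarrow> Exc l \<in> Z \<Longrightarrow> good l"
  by (auto simp: S1_def intro: norm2_good)
lemma good_of_Off: "Z \<subseteq> S1 \<Longrightarrow> Off p \<in> Z \<Longrightarrow> good (dirp p)"
  by (auto simp: S1_def intro: good_dirp)

lemma stepC:
  assumes bin: "binary (3 * d' + 3) c" and sc: "sect (Suc d') c"
    and mZ: "\<forall>Q\<in>Z. mult_ge (Suc d') c Q (m + 3)" and ZS: "Z \<subseteq> S1"
    and ne: "Z \<noteq> {}" and nex: "\<not> exceptional Z"
  shows "\<exists>c'. sect d' c' \<and> (\<forall>Q\<in>Z. mult_ge d' c' Q m)"
proof -
  have H: "high (3 * d' + 3) c" using sc by (auto simp: sect_iff add.commute)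
  obtain i j where ij: "c i j \<noteq> 0" using sc by (auto simp: sect_def)
  have ijN: "i + j = 3 * d' + 3" using ij bin by (auto simp: binary_def)
  have bin': "binary (3 * Suc d') c" using bin by (simp add: add.commute)
  define g where "g = lev c (3 * Suc d')"
  have hgg: "hg (3 * d' + 3) g" using binary_hg[OF bin'] by (simp add: g_def add.commute)
  have nzg: "nz g" using binary_nz[OF bin' ij] by (simp add: g_def)
  have offg: "\<forall>p. Off p \<in> Z \<longrightarrow> van g (3 * d' + 3) (dirp p) (m + 3)"
    using to_g(1)[OF bin' ZS mZ] by (simp add: g_def add.commute)
  have exg: "\<forall>l. Exc l \<in> Z \<longrightarrow> van g (3 * d' + 3) l (m + 3 - 2 * Suc d')"
    using to_g(2)[OF bin' ZS mZ] by (simp add: g_def add.commute)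
  show ?thesis
  proof (cases "m \<le> 2 * d'")
    case True
    obtain X1 X2 X3 i' j' where X: "isD X1" "isD X2" "isD X3" "X3 (X2 (X1 c)) i' j' \<noteq> 0"
      using nz_choice3[of c i j d', OF ij ijN] by blast
    show ?thesis using trans_ok[OF mZ ZS trans_DDD[OF H bin X(1-3) True] X(4)] .
  next
    case False
    define r where "r = m + 3 - 2 * Suc d'"
    have r2: "2 \<le> r" and rm: "r - 1 = m - 2 * d'" using False by (auto simp: r_def)
    show ?thesis
    proof (cases "\<exists>p. Off p \<in> Z")
      case True
      then obtain p where p: "Off p \<in> Z" by blast
      define w where "w = dirp p"
      have gw: "good w" using good_of_Off[OF ZS p] by (simp add: w_def)
      have vw: "van g (3 * d' + 3) w (m + 3)" using offg[rule_format, OF p] by (simp add: w_def)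
      have "van g (3 * d' + 3) w 3" using van_mono[OF vw] by simp
      then obtain h where h: "hg (3 * d') h" "nz h"
        "\<forall>w' r. good w' \<longrightarrow> van g (3 * d' + 3) w' r \<longrightarrow> van h (3 * d') w' (if w' = w then r - 3 else r)"
        using divk[OF gw, of "3 * d'" 3 g] hgg nzg by auto
      have hw: "van h (3 * d') w m"
        using h(3)[rule_format, OF gw vw] by simp
      show ?thesis
      proof (rule from_h[OF h(1,2) ZS])
        show "\<forall>p. Off p \<in> Z \<longrightarrow> van h (3 * d') (dirp p) m"
        proof (intro allI impI)
          fix p' assume p': "Off p' \<in> Z"
          have A: "van g (3 * d' + 3) (dirp p') (m + 3)" using offg[rule_format, OF p'] .
          have "van h (3 * d') (dirp p') (if dirp p' = w then m + 3 - 3 else m + 3)"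
            by (rule h(3)[rule_format, OF good_of_Off[OF ZS p'] A])
          then show "van h (3 * d') (dirp p') m" by (cases "dirp p' = w") (auto elim: van_mono)
        qed
        show "\<forall>l. Exc l \<in> Z \<longrightarrow> van h (3 * d') l (m - 2 * d')"
        proof (intro allI impI)
          fix l assume l: "Exc l \<in> Z"
          show "van h (3 * d') l (m - 2 * d')"
          proof (cases "l = w")
            case True
            then show ?thesis using hw by (auto elim: van_mono)
          next
            case False
            have A: "van g (3 * d' + 3) l r" using exg[rule_format, OF l] by (simp add: r_def)
            have "van h (3 * d') l (if l = w then r - 3 else r)"
              by (rule h(3)[rule_format, OF good_of_Exc[OF ZS l] A])
            then show ?thesis using False rm by (auto elim: van_mono)
          qed
        qed
      qed
    next
      case False
      then have noff: "\<forall>p. Off p \<notin> Z" by blast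
      obtain l1 l2 l3 where L: "Exc l1 \<in> Z" "Exc l2 \<in> Z" "Exc l3 \<in> Z" "l1 \<noteq> l2" "l1 \<noteq> l3" "l2 \<noteq> l3"
        using three_exc[OF ZS ne nex noff] by blast
      have g1: "good l1" "good l2" "good l3" using L good_of_Exc[OF ZS] by auto
      have v: "van g (3 * d' + 3) l r" if "Exc l \<in> Z" for l using exg[rule_format, OF that] by (simp add: r_def)
      have e3: "Suc (3 * d' + 2) = 3 * d' + 3" by simp
      have hg0: "hg (Suc (3 * d' + 2)) g" unfolding e3 by (rule hgg)
      have v1: "van g (Suc (3 * d' + 2)) l1 1" unfolding e3 using van_mono[OF v[OF L(1)]] r2 by simp
      obtain h1 where h1: "hg (3 * d' + 2) h1" "nz h1"
        "\<forall>w' r. good w' \<longrightarrow> van g (Suc (3 * d' + 2)) w' r \<longrightarrow> van h1 (3 * d' + 2) w' (if w' = l1 then r - 1 else r)"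
        using div_dir[OF g1(1) hg0 nzg v1] by blast
      have V1: "van h1 (3 * d' + 2) l (if l = l1 then r - 1 else r)" if "Exc l \<in> Z" for l
        using h1(3)[rule_format, OF good_of_Exc[OF ZS that]] v[OF that] unfolding e3 by simp
      have hg1: "hg (Suc (3 * d' + 1)) h1" using h1(1) by simp
      have v2: "van h1 (Suc (3 * d' + 1)) l2 1" using van_mono[OF V1[OF L(2)]] r2 L(4) by simp
      obtain h2 where h2: "hg (3 * d' + 1) h2" "nz h2"
        "\<forall>w' r. good w' \<longrightarrow> van h1 (Suc (3 * d' + 1)) w' r \<longrightarrow> van h2 (3 * d' + 1) w' (if w' = l2 then r - 1 else r)"
        using div_dir[OF g1(2) hg1 h1(2) v2] by blast
      have V2: "van h2 (3 * d' + 1) l (if l = l2 then (if l = l1 then r - 1 else r) - 1 else (if l = l1 then r - 1 else r))"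
        if "Exc l \<in> Z" for l
        using h2(3)[rule_format, OF good_of_Exc[OF ZS that]] V1[OF that] by simp
      have hg2: "hg (Suc (3 * d')) h2" using h2(1) by simp
      have v3: "van h2 (Suc (3 * d')) l3 1" using van_mono[OF V2[OF L(3)]] r2 L(5,6) by simp
      obtain h3 where h3: "hg (3 * d') h3" "nz h3"
        "\<forall>w' r. good w' \<longrightarrow> van h2 (Suc (3 * d')) w' r \<longrightarrow> van h3 (3 * d') w' (if w' = l3 then r - 1 else r)"
        using div_dir[OF g1(3) hg2 h2(2) v3] by blast
      show ?thesis
      proof (rule from_h[OF h3(1,2) ZS])
        show "\<forall>p. Off p \<in> Z \<longrightarrow> van h3 (3 * d') (dirp p) m" using noff by blast
        show "\<forall>l. Exc l \<in> Z \<longrightarrow> van h3 (3 * d') l (m - 2 * d')"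
        proof (intro allI impI)
          fix l assume l: "Exc l \<in> Z"
          have A: "van h2 (Suc (3 * d')) l (if l = l2 then (if l = l1 then r - 1 else r) - 1 else (if l = l1 then r - 1 else r))"
            using V2[OF l] by simp
          have B: "van h3 (3 * d') l (if l = l3 then (if l = l2 then (if l = l1 then r - 1 else r) - 1 else (if l = l1 then r - 1 else r)) - 1
              else (if l = l2 then (if l = l1 then r - 1 else r) - 1 else (if l = l1 then r - 1 else r)))"
            by (rule h3(3)[rule_format, OF good_of_Exc[OF ZS l] A])
          have "r - 1 \<le> (if l = l3 then (if l = l2 then (if l = l1 then r - 1 else r) - 1 else (if l = l1 then r - 1 else r)) - 1
              else (if l = l2 then (if l = l1 then r - 1 else r) - 1 else (if l = l1 then r - 1 else r)))"
            using L(4-6) by auto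
          then show "van h3 (3 * d') l (m - 2 * d')" using van_mono[OF B] rm by simp
        qed
      qed
    qed
  qed
qed



definition Pm :: "nat \<Rightarrow> s1pt set \<Rightarrow> nat \<Rightarrow> bool" where
  "Pm M Z d \<longleftrightarrow> (\<exists>c. sect d c \<and> (\<forall>Q\<in>Z. mult_ge d c Q M))"

lemma alpha_Pm: "alpha M Z = (LEAST d. Pm M Z d)"
  by (simp add: alpha_def Pm_def)

lemma alpha_eq: "Pm M Z d \<Longrightarrow> (\<And>d'. d' < d \<Longrightarrow> \<not> Pm M Z d') \<Longrightarrow> alpha M Z = d"
  unfolding alpha_Pm by (rule Least_equality) (auto simp: not_less[symmetric])

definition g0 :: "nat \<Rightarrow> complex" where "g0 j = (if j = 0 then 1 else 0)"
lemma hg_g0: "hg 0 g0" by (simp add: hg_def g0_def)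
lemma nz_g0: "nz g0" by (auto simp: nz_def g0_def)

lemma build:
  assumes "finite W" "\<forall>w\<in>W. good w"
  shows "\<exists>N g. hg N g \<and> nz g \<and> (\<forall>w\<in>W. van g N w M)"
  using assms
proof (induction W rule: finite_induct)
  case empty
  then show ?case using hg_g0 nz_g0 by blast
next
  case (insert w W)
  then obtain N g where g: "hg N g" "nz g" "\<forall>w\<in>W. van g N w M" by auto
  have gw: "good w" using insert by auto
  obtain g' where g': "hg (N + M) g'" "nz g'"
    "\<forall>w' r. good w' \<longrightarrow> van g N w' r \<longrightarrow> van g' (N + M) w' (if w' = w then r + M else r)"
    using mulk[OF gw g(1,2)] by blast
  show ?case
  proof (intro exI conjI ballI)
    show "hg (N + M) g'" "nz g'" by (fact g'(1)) (fact g'(2))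
    fix w' assume w': "w' \<in> insert w W"
    show "van g' (N + M) w' M"
    proof (cases "w' = w")
      case True
      have "van g' (N + M) w (if w = w then 0 + M else 0)"
        by (rule g'(3)[rule_format, OF gw van_zero_r])
      then show ?thesis using True by simp
    next
      case False
      then have w'W: "w' \<in> W" using w' by auto
      have gw': "good w'" using insert w'W by auto
      have "van g' (N + M) w' (if w' = w then M + M else M)"
        by (rule g'(3)[rule_format, OF gw' g(3)[rule_format, OF w'W]])
      then show ?thesis using False by simp
    qed
  qed
qed

definition dirQ :: "s1pt \<Rightarrow> complex \<times> complex" where
  "dirQ Q = (case Q of Off p \<Rightarrow> dirp p | Exc l \<Rightarrow> l)"

lemma good01: "good (0, 1)" by (simp add: good_def)

lemma existence:
  assumes "finite Z" "Z \<subseteq> S1"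
  shows "\<exists>d. Pm M Z d"
proof -
  have gW: "\<forall>w\<in>dirQ ` Z. good w"
  proof
    fix w assume "w \<in> dirQ ` Z"
    then obtain Q where Q: "Q \<in> Z" "w = dirQ Q" by auto
    show "good w"
    proof (cases Q)
      case (Off p) then show ?thesis using Q good_of_Off[OF assms(2)] by (simp add: dirQ_def)
    next
      case (Exc l) then show ?thesis using Q good_of_Exc[OF assms(2)] by (simp add: dirQ_def)
    qed
  qed
  obtain N g where g: "hg N g" "nz g" "\<forall>w\<in>dirQ ` Z. van g N w M"
    using build[OF finite_imageI[OF assms(1)] gW] by blast
  obtain g' where g': "hg (N + 2 * N) g'" "nz g'"
    "\<forall>w' r. good w' \<longrightarrow> van g N w' r \<longrightarrow> van g' (N + 2 * N) w' (if w' = (0, 1) then r + 2 * N else r)"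
    using mulk[OF good01 g(1,2)] by blast
  have e: "N + 2 * N = 3 * N" by simp
  have V: "van g' (3 * N) w M" if "w \<in> dirQ ` Z" for w
  proof -
    have "van g' (N + 2 * N) w (if w = (0, 1) then M + 2 * N else M)"
      by (rule g'(3)[rule_format, OF gW[rule_format, OF that] g(3)[rule_format, OF that]])
    then show ?thesis unfolding e by (cases "w = (0, 1)") (auto elim: van_mono)
  qed
  have hg3: "hg (3 * N) g'" using g'(1) unfolding e .
  have b: "binary (3 * N) (emb (3 * N) g')" by (rule binary_emb)
  have lv: "lev (emb (3 * N) g') (3 * N) = g'" by (rule lev_emb[OF hg3])
  have "Pm M Z N" unfolding Pm_def
  proof (intro exI conjI ballI)
    show "sect N (emb (3 * N) g')" by (rule sect_emb[OF hg3 g'(2)])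
    fix Q assume Q: "Q \<in> Z"
    then have QS: "Q \<in> S1" using assms(2) by auto
    show "mult_ge N (emb (3 * N) g') Q M"
    proof (cases rule: S1_cases[OF QS])
      case (1 p)
      have "dirp p \<in> dirQ ` Z" using Q 1(1) by (intro image_eqI[of _ _ "Off p"]) (auto simp: dirQ_def)
      then have "van g' (3 * N) (dirp p) M" by (rule V)
      then show ?thesis using mult_ge_bin_Off[OF b 1(2,3)] lv 1(1) by simp
    next
      case (2 l)
      have "l \<in> dirQ ` Z" using Q 2(1) by (intro image_eqI[of _ _ "Exc l"]) (auto simp: dirQ_def)
      then have "van g' (3 * N) l M" by (rule V)
      then have "van g' (3 * N) l (M - 2 * N)" by (rule van_mono) simp
      then show ?thesis using mult_ge_bin_Exc[OF b 2(2)] lv 2(1) by simp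
    qed
  qed
  then show ?thesis by blast
qed

lemma not_P0:
  assumes "Z \<noteq> {}" "Z \<subseteq> S1" "1 \<le> M"
  shows "\<not> Pm M Z 0"
proof
  assume "Pm M Z 0"
  then obtain c where c: "sect 0 c" "\<forall>Q\<in>Z. mult_ge 0 c Q M" by (auto simp: Pm_def)
  have c00: "c 0 0 \<noteq> 0" using c(1) unfolding sect_def by (metis add_is_0 not_gr_zero mult_0_right)
  obtain Q where Q: "Q \<in> Z" using assms(1) by auto
  have QS: "Q \<in> S1" using Q assms(2) by auto
  have mQ: "mult_ge 0 c Q M" using c(2) Q by auto
  show False
  proof (cases rule: S1_cases[OF QS])
    case (1 p)
    obtain p0 p1 p2 where p: "p = (p0, p1, p2)" by (cases p) auto
    have "taylor3 0 c p 0 0 0 = 0" using mQ assms(3) unfolding 1(1) mult_ge_def by auto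
    moreover have "taylor3 0 c p 0 0 0 = c 0 0" by (simp add: taylor3_def p)
    ultimately show False using c00 by simp
  next
    case (2 l)
    have z: "taylorE 0 c l 0 0 = 0" using mQ assms(3) unfolding 2(1) mult_ge_def by auto
    show False using norm2_good[OF 2(2)]
    proof (rule goodE)
      fix t assume "l = (1, t)"
      then show False using z c00 by (simp add: tE1 TC_def lev_def)
    next
      assume "l = (0, 1)"
      then show False using z c00 by (simp add: tE0)
    qed
  qed
qed

lemma step:
  assumes "sect (Suc d') c" "\<forall>Q\<in>Z. mult_ge (Suc d') c Q (m + 3)" "Z \<subseteq> S1" "Z \<noteq> {}" "\<not> exceptional Z"
  shows "\<exists>c'. sect d' c' \<and> (\<forall>Q\<in>Z. mult_ge d' c' Q m)"
proof (cases "binary (3 * d' + 3) c")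
  case True
  then show ?thesis using stepC[OF True assms] by blast
next
  case False
  then obtain i j where ij: "i + j \<noteq> 3 * d' + 3" "c i j \<noteq> 0" by (auto simp: binary_def)
  have "high (3 * d' + 3) c" using assms(1) by (auto simp: sect_iff add.commute)
  then have "\<not> (3 * d' + 3 < i + j)" using ij(2) unfolding high_def by blast
  then have "i + j < 3 * d' + 3" using ij(1) by linarith
  then show ?thesis using stepAB[OF assms(1-3)] ij by blast
qed

definition levz :: "(nat \<Rightarrow> nat \<Rightarrow> complex) \<Rightarrow> nat \<Rightarrow> nat \<Rightarrow> complex" where
  "levz c n j = (if j \<le> n then c (n - j) j else 0)"

lemma hg_levz: "hg n (levz c n)" by (simp add: hg_def levz_def)

lemma levz_van:
  assumes "good l" "exM k c l M" "k \<le> n"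
  shows "van (levz c n) n l (M - (n - k))"
  using assms(1)
proof (rule goodE)
  fix t assume l: "l = (1, t)"
  show ?thesis unfolding l van_1 vanA_def
  proof (intro allI impI)
    fix b assume "b < M - (n - k)"
    then have "taylorE k c (1, t) (n - k) b = 0" using assms(2) l unfolding exM_def by auto
    then have "TC (lev c n) n t b = 0" using assms(3) by (simp add: tE1)
    moreover have "TC (levz c n) n t b = TC (lev c n) n t b"
      unfolding TC_def by (rule sum.cong) (auto simp: levz_def lev_def)
    ultimately show "TC (levz c n) n t b = 0" by simp
  qed
next
  assume l: "l = (0, 1)"
  show ?thesis unfolding l van_0 vanI_def
  proof (intro allI impI)
    fix a assume a: "a < M - (n - k)" "a \<le> n"
    then have "taylorE k c (0, 1) a (n - k) = 0" using assms(2) l unfolding exM_def by auto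
    then show "levz c n (n - a) = 0" using assms(3) a by (simp add: tE0 levz_def)
  qed
qed

lemma levz_zero: "\<not> nz (levz c n) \<Longrightarrow> i + j = n \<Longrightarrow> c i j = 0"
  unfolding nz_def levz_def by (metis add_diff_cancel_right' le_add2)

lemma lower2:
  assumes "good l1" "good l2" "l1 \<noteq> l2" "sect 1 c" "exM 1 c l1 4" "exM 1 c l2 4"
  shows False
proof -
  have z1: "\<not> nz (levz c 1)"
    using van_zero[OF hg_levz assms(1) levz_van[OF assms(1) assms(5), of 1]] by simp
  have z2: "\<not> nz (levz c 2)"
    using van_zero[OF hg_levz assms(1) levz_van[OF assms(1) assms(5), of 2]] by simp
  have z3: "\<not> nz (levz c 3)"
  proof
    assume nz3: "nz (levz c 3)"
    have a1: "van (levz c 3) 3 l1 2" using levz_van[OF assms(1) assms(5), of 3] by simp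
    have a2: "van (levz c 3) 3 l2 2" using levz_van[OF assms(2) assms(6), of 3] by simp
    have e32: "(Suc 2::nat) = 3" by simp
    have e21: "(Suc 1::nat) = 2" by simp
    have hg3: "hg (Suc 2) (levz c 3)" unfolding e32 by (rule hg_levz)
    have a1s: "van (levz c 3) (Suc 2) l1 2" unfolding e32 by (rule a1)
    have a2s: "van (levz c 3) (Suc 2) l2 2" unfolding e32 by (rule a2)
    have a1': "van (levz c 3) (Suc 2) l1 1" using van_mono[OF a1s] by simp
    obtain h1 where h1: "hg 2 h1" "nz h1"
      "\<forall>w' r. good w' \<longrightarrow> van (levz c 3) (Suc 2) w' r \<longrightarrow> van h1 2 w' (if w' = l1 then r - 1 else r)"
      using div_dir[OF assms(1) hg3 nz3 a1'] by blast
    have "van h1 2 l1 (if l1 = l1 then 2 - 1 else 2)"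
      by (rule h1(3)[rule_format, OF assms(1) a1s])
    then have b1: "van h1 2 l1 1" by simp
    have "van h1 2 l2 (if l2 = l1 then 2 - 1 else 2)"
      by (rule h1(3)[rule_format, OF assms(2) a2s])
    then have b2: "van h1 2 l2 2" using assms(3) by simp
    have hg2: "hg (Suc 1) h1" unfolding e21 by (rule h1(1))
    have b1': "van h1 (Suc 1) l1 1" unfolding e21 by (rule b1)
    have b2': "van h1 (Suc 1) l2 2" unfolding e21 by (rule b2)
    obtain h2 where h2: "hg 1 h2" "nz h2"
      "\<forall>w' r. good w' \<longrightarrow> van h1 (Suc 1) w' r \<longrightarrow> van h2 1 w' (if w' = l1 then r - 1 else r)"
      using div_dir[OF assms(1) hg2 h1(2) b1'] by blast
    have "van h2 1 l2 (if l2 = l1 then 2 - 1 else 2)"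
      by (rule h2(3)[rule_format, OF assms(2) b2'])
    then have "van h2 1 l2 2" using assms(3) by simp
    then have "\<not> nz h2" using van_zero[OF h2(1) assms(2)] by simp
    then show False using h2(2) by simp
  qed
  have "c i j = 0" for i j
  proof -
    consider "i + j = 0" | "i + j = 1" | "i + j = 2" | "i + j = 3" | "3 < i + j" by linarith
    then show ?thesis
    proof cases
      case 1 then show ?thesis using assms(4) by (auto simp: sect_def)
    next
      case 2 then show ?thesis using levz_zero[OF z1] by simp
    next
      case 3 then show ?thesis using levz_zero[OF z2] by simp
    next
      case 4 then show ?thesis using levz_zero[OF z3] by simp
    next
      case 5 then show ?thesis using assms(4) by (auto simp: sect_def)
    qed
  qed
  then show False using assms(4) by (auto simp: sect_def)
qed



lemma single_vals:
  assumes "norm2 l" "1 \<le> k" "k \<le> 5"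
  shows "alpha k {Exc l} = 1"
proof (rule alpha_eq)
  have gl: "good l" by (rule norm2_good[OF assms(1)])
  obtain g where g: "hg (0 + 3) g" "nz g"
    "\<forall>w' r. good w' \<longrightarrow> van g0 0 w' r \<longrightarrow> van g (0 + 3) w' (if w' = l then r + 3 else r)"
    using mulk[OF gl hg_g0 nz_g0] by blast
  have "van g (0 + 3) l (if l = l then 0 + 3 else 0)" by (rule g(3)[rule_format, OF gl van_zero_r])
  then have v: "van g (3 * 1) l 3" by simp
  have hg3: "hg (3 * 1) g" using g(1) by simp
  have b: "binary (3 * 1) (emb (3 * 1) g)" by (rule binary_emb)
  have lv: "lev (emb (3 * 1) g) (3 * 1) = g" by (rule lev_emb[OF hg3])
  have "mult_ge 1 (emb (3 * 1) g) (Exc l) k"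
    unfolding mult_ge_bin_Exc[OF b assms(1)] lv using van_mono[OF v] assms(3) by simp
  then show "Pm k {Exc l} 1" unfolding Pm_def using sect_emb[OF hg3 g(2)] by blast
next
  fix d' :: nat assume "d' < 1"
  have S: "{Exc l} \<subseteq> S1" using assms(1) unfolding S1_def by blast
  have "1 \<le> k" by fact
  then have "\<not> Pm k {Exc l} 0" using not_P0[OF _ S] by blast
  then show "\<not> Pm k {Exc l} d'" using \<open>d' < 1\<close> by simp
qed

lemma pair_vals:
  assumes "norm2 l1" "norm2 l2" "l1 \<noteq> l2" "4 \<le> k" "k \<le> 7"
  shows "alpha k {Exc l1, Exc l2} = 2"
proof (rule alpha_eq)
  have gl1: "good l1" by (rule norm2_good[OF assms(1)])
  have gl2: "good l2" by (rule norm2_good[OF assms(2)])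
  obtain g1 where g1: "hg (0 + 3) g1" "nz g1"
    "\<forall>w' r. good w' \<longrightarrow> van g0 0 w' r \<longrightarrow> van g1 (0 + 3) w' (if w' = l1 then r + 3 else r)"
    using mulk[OF gl1 hg_g0 nz_g0] by blast
  have "van g1 (0 + 3) l1 (if l1 = l1 then 0 + 3 else 0)" by (rule g1(3)[rule_format, OF gl1 van_zero_r])
  then have v1: "van g1 (0 + 3) l1 3" by simp
  obtain g where g: "hg (0 + 3 + 3) g" "nz g"
    "\<forall>w' r. good w' \<longrightarrow> van g1 (0 + 3) w' r \<longrightarrow> van g (0 + 3 + 3) w' (if w' = l2 then r + 3 else r)"
    using mulk[OF gl2 g1(1,2)] by blast
  have "van g (0 + 3 + 3) l1 (if l1 = l2 then 3 + 3 else 3)" by (rule g(3)[rule_format, OF gl1 v1])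
  then have w1: "van g (3 * 2) l1 3" using assms(3) by simp
  have "van g (0 + 3 + 3) l2 (if l2 = l2 then 0 + 3 else 0)" by (rule g(3)[rule_format, OF gl2 van_zero_r])
  then have w2: "van g (3 * 2) l2 3" by simp
  have hg6: "hg (3 * 2) g" using g(1) by simp
  have b: "binary (3 * 2) (emb (3 * 2) g)" by (rule binary_emb)
  have lv: "lev (emb (3 * 2) g) (3 * 2) = g" by (rule lev_emb[OF hg6])
  have "mult_ge 2 (emb (3 * 2) g) (Exc l1) k"
    unfolding mult_ge_bin_Exc[OF b assms(1)] lv using van_mono[OF w1] assms(5) by simp
  moreover have "mult_ge 2 (emb (3 * 2) g) (Exc l2) k"
    unfolding mult_ge_bin_Exc[OF b assms(2)] lv using van_mono[OF w2] assms(5) by simp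
  ultimately show "Pm k {Exc l1, Exc l2} 2" unfolding Pm_def using sect_emb[OF hg6 g(2)] by blast
next
  fix d' :: nat assume d': "d' < 2"
  show "\<not> Pm k {Exc l1, Exc l2} d'"
  proof (cases "d' = 0")
    case True
    have S: "{Exc l1, Exc l2} \<subseteq> S1" using assms(1,2) unfolding S1_def by blast
    have "1 \<le> k" using assms(4) by simp
    then have "\<not> Pm k {Exc l1, Exc l2} 0" using not_P0[OF _ S] by blast
    then show ?thesis using True by simp
  next
    case False
    then have d1: "d' = 1" using d' by simp
    show ?thesis
    proof
      assume "Pm k {Exc l1, Exc l2} d'"
      then obtain c where c: "sect 1 c" "mult_ge 1 c (Exc l1) k" "mult_ge 1 c (Exc l2) k"
        unfolding Pm_def d1 by blast
      have "exM 1 c l1 4" using c(2) assms(4) by (auto simp: mult_ge_Exc elim: exM_mono)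
      moreover have "exM 1 c l2 4" using c(3) assms(4) by (auto simp: mult_ge_Exc elim: exM_mono)
      ultimately show False
        using lower2[OF norm2_good[OF assms(1)] norm2_good[OF assms(2)] assms(3) c(1)] by blast
    qed
  qed
qed

theorem theorem2:
  assumes "Z \<subseteq> S1" and "finite Z" and "Z \<noteq> {}"
  shows "(\<exists>m::nat. m > 0 \<and> alpha m Z = alpha (m + 1) Z \<and> alpha (m + 1) Z = alpha (m + 2) Z
            \<and> alpha (m + 2) Z = alpha (m + 3) Z)
         \<longleftrightarrow> ((\<exists>Q. Q \<in> E1 \<and> Z = {Q})
              \<or> (\<exists>Q1 Q2. Q1 \<in> E1 \<and> Q2 \<in> E1 \<and> Q1 \<noteq> Q2 \<and> Z = {Q1, Q2}))"
proof
  assume "\<exists>m::nat. m > 0 \<and> alpha m Z = alpha (m + 1) Z \<and> alpha (m + 1) Z = alpha (m + 2) Z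
            \<and> alpha (m + 2) Z = alpha (m + 3) Z"
  then obtain m :: nat where m: "alpha m Z = alpha (m + 3) Z" by auto
  show "(\<exists>Q. Q \<in> E1 \<and> Z = {Q}) \<or> (\<exists>Q1 Q2. Q1 \<in> E1 \<and> Q2 \<in> E1 \<and> Q1 \<noteq> Q2 \<and> Z = {Q1, Q2})"
  proof (rule ccontr)
    assume "\<not> ?thesis"
    then have nex: "\<not> exceptional Z" by (simp add: exceptional_def)
    define d where "d = alpha (m + 3) Z"
    have P: "Pm (m + 3) Z d" unfolding d_def alpha_Pm
      using existence[OF assms(2,1)] by (rule LeastI_ex)
    have "d \<noteq> 0"
    proof
      assume "d = 0"
      then show False using P not_P0[OF assms(3,1), of "m + 3"] by simp
    qed
    then obtain d' where dd: "d = Suc d'" by (cases d) auto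
    obtain c where c: "sect (Suc d') c" "\<forall>Q\<in>Z. mult_ge (Suc d') c Q (m + 3)"
      using P unfolding Pm_def dd by blast
    obtain c' where "sect d' c'" "\<forall>Q\<in>Z. mult_ge d' c' Q m"
      using step[OF c assms(1,3) nex] by blast
    then have "Pm m Z d'" unfolding Pm_def by blast
    then have "alpha m Z \<le> d'" unfolding alpha_Pm by (rule Least_le)
    then show False using m dd d_def by simp
  qed
next
  assume "(\<exists>Q. Q \<in> E1 \<and> Z = {Q}) \<or> (\<exists>Q1 Q2. Q1 \<in> E1 \<and> Q2 \<in> E1 \<and> Q1 \<noteq> Q2 \<and> Z = {Q1, Q2})"
  then show "\<exists>m::nat. m > 0 \<and> alpha m Z = alpha (m + 1) Z \<and> alpha (m + 1) Z = alpha (m + 2) Z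
            \<and> alpha (m + 2) Z = alpha (m + 3) Z"
  proof
    assume "\<exists>Q. Q \<in> E1 \<and> Z = {Q}"
    then obtain l where l: "norm2 l" "Z = {Exc l}" by (auto simp: E1_def)
    show ?thesis
      by (rule exI[of _ 1]) (simp add: l(2) single_vals[OF l(1)])
  next
    assume "\<exists>Q1 Q2. Q1 \<in> E1 \<and> Q2 \<in> E1 \<and> Q1 \<noteq> Q2 \<and> Z = {Q1, Q2}"
    then obtain l1 l2 where l: "norm2 l1" "norm2 l2" "l1 \<noteq> l2" "Z = {Exc l1, Exc l2}"
      by (auto simp: E1_def)
    show ?thesis
      by (rule exI[of _ 4]) (simp add: l(4) pair_vals[OF l(1-3)])
  qed
qed


end
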